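(* Let $R$ be the set of all permutations $\pi\in\mathfrak{S}_n$ ($n\ge1$) such that: $\pi$ avoids $231$; every cycle of $\pi$ has length $1$, $2$ or $3$; $\pi$ has at least one $2$-cycle and at least one fixed point; the set of all $3$-cycles of $\pi$ is a (nonempty) collection of crossing $3$-cycles with blocks $A,B,C$; and $1\in A$, $n\in C$. Then \[ r(t,x,y)=\sum_{\pi\in R}t^{c_1(\pi)}x^{c_2(\pi)}y^{c_3(\pi)}=\dfrac{y}{1-2y}\cdot\dfrac{6xt-2x^2t+2xt^2-x^2t^2}{(1-x)^2}. \]
   Context: A permutation avoids $231$ if there are no indices $i<j<k$ with $\pi_k<\pi_i<\pi_j$. A collection of crossing $3$-cycles of $\pi$ is a nonempty set of $3$-cycles $(a_i,c_i,b_i)$ (meaning $a_i\mapsto c_i\mapsto b_i\mapsto a_i$) of $\pi$ with $a_i<b_i<c_i$, such that $a_i<b_j<c_k$ for all $i,j,k$; its blocks are $A=\{a_i\}$, $B=\{b_i\}$, $C=\{c_i\}$. $c_k(\pi)$ is the number of $k$-cycles of $\pi$. (The paper describes $R$ as permutations composed of a single nonempty family of crossing 3-cycles that also cross some positive number of 2-cycles and at least one fixed point.) *)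

theory Defs
  imports "HOL-Analysis.Analysis" "HOL-Combinatorics.Permutations"
begin

definition avoids231 :: "(nat \<Rightarrow> nat) \<Rightarrow> nat \<Rightarrow> bool" where
  "avoids231 p n \<longleftrightarrow>
     \<not> (\<exists>i j k. 1 \<le> i \<and> i < j \<and> j < k \<and> k \<le> n \<and> p k < p i \<and> p i < p j)"

definition orb :: "(nat \<Rightarrow> nat) \<Rightarrow> nat \<Rightarrow> nat set" where
  "orb p i = {(p ^^ m) i | m. True}"

definition ncyc :: "nat \<Rightarrow> (nat \<Rightarrow> nat) \<Rightarrow> nat \<Rightarrow> nat" where
  "ncyc k p n = card {orb p i | i. i \<in> {1..n} \<and> card (orb p i) = k}"

text \<open>3-cycles (a,c,b) of p, i.e. a -> c -> b -> a with a<b<c, recorded as triples (a,b,c).\<close>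
definition three_cycles :: "(nat \<Rightarrow> nat) \<Rightarrow> (nat \<times> nat \<times> nat) set" where
  "three_cycles p = {(a,b,c). a < b \<and> b < c \<and> p a = c \<and> p c = b \<and> p b = a}"

definition crossing_3cycles :: "(nat \<Rightarrow> nat) \<Rightarrow> (nat \<times> nat \<times> nat) set \<Rightarrow> bool" where
  "crossing_3cycles p S \<longleftrightarrow> S \<noteq> {} \<and> S \<subseteq> three_cycles p \<and>
     (\<forall>(a,b,c)\<in>S. \<forall>(a',b',c')\<in>S. \<forall>(a'',b'',c'')\<in>S. a < b' \<and> b' < c'')"

definition blockA :: "(nat \<times> nat \<times> nat) set \<Rightarrow> nat set" where
  "blockA S = (\<lambda>(a,b,c). a) ` S"
definition blockC :: "(nat \<times> nat \<times> nat) set \<Rightarrow> nat set" where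
  "blockC S = (\<lambda>(a,b,c). c) ` S"

definition Rset :: "nat \<Rightarrow> (nat \<Rightarrow> nat) set" where
  "Rset n = {p. p permutes {1..n} \<and> avoids231 p n
     \<and> (\<forall>i\<in>{1..n}. card (orb p i) \<in> {1,2,3})
     \<and> ncyc 2 p n \<ge> 1 \<and> ncyc 1 p n \<ge> 1
     \<and> (\<forall>i\<in>{1..n}. card (orb p i) = 3 \<longrightarrow> (\<exists>(a,b,c)\<in>three_cycles p. i \<in> {a,b,c}))
     \<and> crossing_3cycles p (three_cycles p)
     \<and> 1 \<in> blockA (three_cycles p) \<and> n \<in> blockC (three_cycles p)}"

end

theory Submission
  imports Defs
begin


lemma has_sum_Sigma_real:
  fixes f :: "'a \<times> 'b \<Rightarrow> real"
  assumes "\<And>a. a \<in> A \<Longrightarrow> ((\<lambda>b. f (a,b)) has_sum g a) (B a)"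
      and "\<And>a. a \<in> A \<Longrightarrow> ((\<lambda>b. \<bar>f (a,b)\<bar>) has_sum G a) (B a)"
      and "(g has_sum s) A" and "G summable_on A"
  shows "(f has_sum s) (Sigma A B)"
proof -
  have "(\<lambda>z. \<bar>f z\<bar>) summable_on Sigma A B"
    by (rule summable_on_SigmaI[where g=G]) (use assms in auto)
  hence "f summable_on Sigma A B"
    using abs_summable_summable[of f "Sigma A B"] by (simp add: real_norm_def)
  thus ?thesis by (intro has_sum_SigmaI[where g=g]) (use assms in auto)
qed

lemma has_sum_geo:
  fixes x :: real assumes "\<bar>x\<bar> < 1"
  shows "((\<lambda>n. x ^ n) has_sum (1 / (1 - x))) UNIV"
proof -
  have "summable (\<lambda>n. norm (x ^ n))"
    using assms by (simp add: power_abs summable_geometric)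
  moreover have "(\<lambda>n. x ^ n) sums (1 / (1 - x))"
    using geometric_sums[of x] assms by simp
  ultimately show ?thesis by (rule norm_summable_imp_has_sum)
qed

lemma has_sum_geo2:
  fixes x :: real assumes "\<bar>x\<bar> < 1"
  shows "((\<lambda>(a::nat,b::nat). x ^ (a+b)) has_sum (1 / (1 - x)^2)) UNIV"
proof -
  have x1: "\<bar>\<bar>x\<bar>\<bar> < 1" using assms by simp
  have U: "(UNIV :: (nat\<times>nat) set) = Sigma UNIV (\<lambda>_. UNIV)" by auto
  have "((\<lambda>(a,b). x ^ (a+b)) has_sum (1 / (1 - x)^2)) (Sigma UNIV (\<lambda>_. UNIV))"
  proof (rule has_sum_Sigma_real[where g="\<lambda>a. x^a / (1-x)" and G="\<lambda>a. \<bar>x\<bar>^a / (1-\<bar>x\<bar>)"])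
    fix a :: nat
    show "((\<lambda>b. (\<lambda>(a,b). x ^ (a+b)) (a,b)) has_sum x^a / (1-x)) UNIV"
      using has_sum_cmult_right[OF has_sum_geo[OF assms], of "x^a"]
      by (simp add: power_add)
    show "((\<lambda>b. \<bar>(\<lambda>(a,b). x ^ (a+b)) (a,b)\<bar>) has_sum \<bar>x\<bar>^a / (1-\<bar>x\<bar>)) UNIV"
      using has_sum_cmult_right[OF has_sum_geo[OF x1], of "\<bar>x\<bar>^a"]
      by (simp add: power_add power_abs abs_mult)
  next
    show "((\<lambda>a. x ^ a / (1 - x)) has_sum 1 / (1 - x)\<^sup>2) UNIV"
      using has_sum_cmult_right[OF has_sum_geo[OF assms], of "1/(1-x)"]
      by (simp add: power2_eq_square)
    show "(\<lambda>a. \<bar>x\<bar> ^ a / (1 - \<bar>x\<bar>)) summable_on UNIV"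
      using has_sum_cmult_right[OF has_sum_geo[OF x1], of "1/(1-\<bar>x\<bar>)"]
      by (auto simp: has_sum_iff)
  qed
  thus ?thesis using U by simp
qed

lemma has_sum_geo2m:
  fixes x :: real assumes "\<bar>x\<bar> < 1"
  shows "((\<lambda>(a::nat,b::nat). x ^ (a+b)) has_sum (1 / (1 - x)^2 - 1)) (UNIV - {(0,0)})"
proof -
  let ?f = "(\<lambda>(a::nat,b::nat). x ^ (a+b))"
  have "?f summable_on (UNIV - {(0,0)})"
    by (rule summable_on_subset_banach[of _ UNIV]) (use has_sum_geo2[OF assms] in \<open>auto simp: has_sum_iff\<close>)
  hence h: "(?f has_sum infsum ?f (UNIV - {(0,0)})) (UNIV - {(0,0)})" by (simp add: has_sum_infsum)
  have "(?f has_sum 1) {(0,0)}" by (rule has_sum_finiteI) auto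
  from has_sum_Un_disjoint[OF this h] have "(?f has_sum (1 + infsum ?f (UNIV - {(0,0)}))) UNIV"
    by (metis Diff_disjoint Un_Diff_cancel UNIV_I insert_absorb insert_is_Un)
  with has_sum_geo2[OF assms] have "1 + infsum ?f (UNIV - {(0,0)}) = 1 / (1 - x)^2"
    using has_sum_unique by blast
  with h show ?thesis by (metis add_diff_cancel_left')
qed

definition fpc :: "nat \<Rightarrow> nat \<Rightarrow> bool \<Rightarrow> nat" where
  "fpc g1 g2 md = (if md then g1 mod 2 + g2 mod 2 else (g1+g2) mod 2)"
definition tcc :: "nat \<Rightarrow> nat \<Rightarrow> bool \<Rightarrow> nat" where
  "tcc g1 g2 md = (if md then g1 div 2 + g2 div 2 else (g1+g2) div 2)"
definition Qset :: "(nat \<times> nat \<times> bool) set" where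
  "Qset = {(g1,g2,md). (md \<longrightarrow> 1 \<le> g1 \<and> 1 \<le> g2) \<and> 1 \<le> fpc g1 g2 md \<and> 1 \<le> tcc g1 g2 md}"
definition Wm :: "real \<Rightarrow> real \<Rightarrow> nat \<times> nat \<times> bool \<Rightarrow> real" where
  "Wm t x q = (case q of (g1,g2,md) \<Rightarrow> t ^ fpc g1 g2 md * x ^ tcc g1 g2 md)"

lemma has_sum_image_inj:
  assumes "inj_on h A" "((g \<circ> h) has_sum s) A" shows "(g has_sum s) (h ` A)"
  by (subst has_sum_reindex[OF assms(1)]) (rule assms(2))

lemma Qset_decomp:
  "Qset = (\<lambda>(a,b). (2*a, 2*b+1, False)) ` (UNIV - {(0,0)})
        \<union> (\<lambda>(a,b). (2*a+1, 2*b, False)) ` (UNIV - {(0,0)})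
        \<union> (\<lambda>(a,b). (2*a+1, 2*b+2, True)) ` UNIV
        \<union> (\<lambda>(a,b). (2*a+2, 2*b+1, True)) ` UNIV
        \<union> (\<lambda>(a,b). (2*a+1, 2*b+1, True)) ` (UNIV - {(0,0)})"
  (is "_ = ?R")
proof
  have m2: "\<And>a::nat. (2*a+1) mod 2 = 1" "\<And>a::nat. (2*a+1) div 2 = a"
     "\<And>a::nat. (2*a+2) div 2 = a+1" "\<And>a::nat. (2*a+2) mod 2 = 0" by presburger+
  show "?R \<subseteq> Qset" by (auto simp: Qset_def fpc_def tcc_def m2)
next
  show "Qset \<subseteq> ?R"
  proof
    fix q assume q: "q \<in> Qset"
    obtain g1 g2 md where qq: "q = (g1,g2,md)" by (cases q) auto
    show "q \<in> ?R"
    proof (cases md)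
      case True
      with q qq have h: "1 \<le> g1" "1 \<le> g2" "1 \<le> g1 mod 2 + g2 mod 2" "1 \<le> g1 div 2 + g2 div 2"
        unfolding Qset_def fpc_def tcc_def by simp_all
      have "(odd g1 \<and> even g2) \<or> (even g1 \<and> odd g2) \<or> (odd g1 \<and> odd g2)"
        using h(3) by auto
      moreover
      { assume "odd g1" "even g2"
        obtain a where a: "g1 = 2*a+1" using \<open>odd g1\<close> by (meson oddE)
        obtain b where b: "g2 = 2*b" using \<open>even g2\<close> by (meson evenE)
        define b' where "b' = b - 1"
        have b': "b = b'+1" using b h(2) b'_def by simp
        have "q \<in> ((\<lambda>(a,b). (2*a+1, 2*b+2, True))) ` UNIV" using qq a b b' True by (intro image_eqI[where x="(a, b')"]) simp_all
        hence ?thesis by blast }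
      moreover
      { assume "even g1" "odd g2"
        obtain a where a: "g1 = 2*a" using \<open>even g1\<close> by (meson evenE)
        obtain b where b: "g2 = 2*b+1" using \<open>odd g2\<close> by (meson oddE)
        define a' where "a' = a - 1"
        have a': "a = a'+1" using a h(1) a'_def by simp
        have "q \<in> ((\<lambda>(a,b). (2*a+2, 2*b+1, True))) ` UNIV" using qq a b a' True by (intro image_eqI[where x="(a', b)"]) simp_all
        hence ?thesis by blast }
      moreover
      { assume "odd g1" "odd g2"
        obtain a where a: "g1 = 2*a+1" using \<open>odd g1\<close> by (meson oddE)
        obtain b where b: "g2 = 2*b+1" using \<open>odd g2\<close> by (meson oddE)
        have "(a,b) \<noteq> (0,0)" using a b h(4) by auto
        moreover have "q \<in> ((\<lambda>(a,b). (2*a+1, 2*b+1, True))) ` (UNIV - {(0,0)})" using qq a b True \<open>(a,b) \<noteq> (0,0)\<close> by (intro image_eqI[where x="(a, b)"]) simp_all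
        ultimately have ?thesis by blast }
      ultimately show ?thesis by blast
    next
      case False
      with q qq have h0: "1 \<le> (g1+g2) mod 2" "1 \<le> (g1+g2) div 2"
        unfolding Qset_def fpc_def tcc_def by simp_all
      have h: "odd (g1+g2)" "1 \<le> (g1+g2) div 2" using h0 by presburger+
      have "(even g1 \<and> odd g2) \<or> (odd g1 \<and> even g2)" using h(1) by auto
      moreover
      { assume "even g1" "odd g2"
        obtain a where a: "g1 = 2*a" using \<open>even g1\<close> by (meson evenE)
        obtain b where b: "g2 = 2*b+1" using \<open>odd g2\<close> by (meson oddE)
        have "(a,b) \<noteq> (0,0)" using a b h(2) by auto
        moreover have "q \<in> ((\<lambda>(a,b). (2*a, 2*b+1, False))) ` (UNIV - {(0,0)})" using qq a b False \<open>(a,b) \<noteq> (0,0)\<close> by (intro image_eqI[where x="(a, b)"]) simp_all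
        ultimately have ?thesis by blast }
      moreover
      { assume "odd g1" "even g2"
        obtain a where a: "g1 = 2*a+1" using \<open>odd g1\<close> by (meson oddE)
        obtain b where b: "g2 = 2*b" using \<open>even g2\<close> by (meson evenE)
        have "(a,b) \<noteq> (0,0)" using a b h(2) by auto
        moreover have "q \<in> ((\<lambda>(a,b). (2*a+1, 2*b, False))) ` (UNIV - {(0,0)})" using qq a b False \<open>(a,b) \<noteq> (0,0)\<close> by (intro image_eqI[where x="(a, b)"]) simp_all
        ultimately have ?thesis by blast }
      ultimately show ?thesis by blast
    qed
  qed
qed

definition Fmid :: "real \<Rightarrow> real \<Rightarrow> real" where
  "Fmid t x = (6*x*t - 2*x^2*t + 2*x*t^2 - x^2*t^2) / (1 - x)^2"

lemma has_sum_Qset: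
  fixes t x :: real assumes x: "\<bar>x\<bar> < 1"
  shows "(Wm t x has_sum Fmid t x) Qset"
proof -
  let ?G = "1 / (1 - x)^2"
  have m2[simp]: "\<And>a::nat. Suc (a*2) mod 2 = 1" "\<And>a::nat. Suc (2*a) mod 2 = 1" by presburger+
  have g2: "((\<lambda>(a::nat,b::nat). x ^ (a+b)) has_sum ?G) UNIV" by (rule has_sum_geo2[OF x])
  have g2m: "((\<lambda>(a::nat,b::nat). x ^ (a+b)) has_sum (?G - 1)) (UNIV - {(0,0)})" by (rule has_sum_geo2m[OF x])
  have s1: "(Wm t x has_sum (t * (?G - 1))) ((\<lambda>(a,b). (2*a, 2*b+1, False)) ` (UNIV - {(0,0)}))"
    apply (rule has_sum_image_inj)
     apply (auto simp: inj_on_def)[1]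
    using has_sum_cmult_right[OF g2m, of t]
    by (simp add: comp_def Wm_def fpc_def tcc_def case_prod_unfold)
  have s2: "(Wm t x has_sum (t * (?G - 1))) ((\<lambda>(a,b). (2*a+1, 2*b, False)) ` (UNIV - {(0,0)}))"
    apply (rule has_sum_image_inj)
     apply (auto simp: inj_on_def)[1]
    using has_sum_cmult_right[OF g2m, of t]
    by (simp add: comp_def Wm_def fpc_def tcc_def case_prod_unfold)
  have s3: "(Wm t x has_sum (t * x * ?G)) ((\<lambda>(a,b). (2*a+1, 2*b+2, True)) ` UNIV)"
    apply (rule has_sum_image_inj)
     apply (auto simp: inj_on_def)[1]
    using has_sum_cmult_right[OF g2, of "t*x"]
    by (simp add: comp_def Wm_def fpc_def tcc_def case_prod_unfold mult_ac)
  have s4: "(Wm t x has_sum (t * x * ?G)) ((\<lambda>(a,b). (2*a+2, 2*b+1, True)) ` UNIV)"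
    apply (rule has_sum_image_inj)
     apply (auto simp: inj_on_def)[1]
    using has_sum_cmult_right[OF g2, of "t*x"]
    by (simp add: comp_def Wm_def fpc_def tcc_def case_prod_unfold mult_ac)
  have s5: "(Wm t x has_sum (t^2 * (?G - 1))) ((\<lambda>(a,b). (2*a+1, 2*b+1, True)) ` (UNIV - {(0,0)}))"
    apply (rule has_sum_image_inj)
     apply (auto simp: inj_on_def)[1]
    using has_sum_cmult_right[OF g2m, of "t^2"]
    by (simp add: comp_def Wm_def fpc_def tcc_def case_prod_unfold power2_eq_square)
  let ?F1 = "(\<lambda>(a::nat,b::nat). (2*a, 2*b+1, False)) ` (UNIV - {(0,0)})"
  let ?F2 = "(\<lambda>(a::nat,b::nat). (2*a+1, 2*b, False)) ` (UNIV - {(0,0)})"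
  let ?F3 = "(\<lambda>(a::nat,b::nat). (2*a+1, 2*b+2, True)) ` UNIV"
  let ?F4 = "(\<lambda>(a::nat,b::nat). (2*a+2, 2*b+1, True)) ` UNIV"
  let ?F5 = "(\<lambda>(a::nat,b::nat). (2*a+1, 2*b+1, True)) ` (UNIV - {(0,0)})"
  have d1: "?F1 \<inter> ?F2 = {}" by (auto; presburger)
  have d2: "(?F1 \<union> ?F2) \<inter> ?F3 = {}" by auto
  have d3: "(?F1 \<union> ?F2 \<union> ?F3) \<inter> ?F4 = {}" by (auto; presburger)
  have d4: "(?F1 \<union> ?F2 \<union> ?F3 \<union> ?F4) \<inter> ?F5 = {}" by (auto; presburger)
  have "(Wm t x has_sum (t * (?G - 1) + t * (?G - 1) + t * x * ?G + t * x * ?G + t^2 * (?G - 1))) Qset"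
    unfolding Qset_decomp
    using has_sum_Un_disjoint[OF has_sum_Un_disjoint[OF has_sum_Un_disjoint[OF has_sum_Un_disjoint[OF s1 s2 d1] s3 d2] s4 d3] s5 d4] .
  moreover have "t * (?G - 1) + t * (?G - 1) + t * x * ?G + t * x * ?G + t^2 * (?G - 1) = Fmid t x"
  proof -
    have "1 - x \<noteq> 0" using x by auto
    thus ?thesis unfolding Fmid_def by (simp add: field_simps) algebra
  qed
  ultimately show ?thesis by simp
qed


definition mu :: "bool \<Rightarrow> nat \<Rightarrow> nat \<Rightarrow> nat \<Rightarrow> nat" where
  "mu md g1 g2 u = (if md then (if u \<le> g1 then g1 + 1 - u else 2*g1 + g2 + 1 - u) else g1 + g2 + 1 - u)"

lemma refl_count:
  fixes a L :: nat
  shows "card {u \<in> {a+1..a+L}. u = 2*a+L+1-u} = L mod 2"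
    and "card {u \<in> {a+1..a+L}. u < 2*a+L+1-u} = L div 2"
proof -
  show "card {u \<in> {a+1..a+L}. u < 2*a+L+1-u} = L div 2"
  proof -
    have "{u \<in> {a+1..a+L}. u < 2*a+L+1-u} = {a+1..a + L div 2}" by auto
    thus ?thesis by simp
  qed
  show "card {u \<in> {a+1..a+L}. u = 2*a+L+1-u} = L mod 2"
  proof (cases "even L")
    case True
    hence "{u \<in> {a+1..a+L}. u = 2*a+L+1-u} = {}" by auto presburger
    thus ?thesis using True by simp
  next
    case False
    hence "{u \<in> {a+1..a+L}. u = 2*a+L+1-u} = {a + (L+1) div 2}" by auto presburger+
    thus ?thesis using False by simp presburger
  qed
qed

context
  fixes md :: bool and g1 g2 :: nat
  assumes mdc: "md \<longrightarrow> 1 \<le> g1 \<and> 1 \<le> g2"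
begin

lemma mu_range: "u \<in> {1..g1+g2} \<Longrightarrow> mu md g1 g2 u \<in> {1..g1+g2}"
  by (auto simp: mu_def)

lemma mu_inv: "u \<in> {1..g1+g2} \<Longrightarrow> mu md g1 g2 (mu md g1 g2 u) = u"
  by (auto simp: mu_def)

lemma mu_blk: "md \<Longrightarrow> u \<in> {1..g1+g2} \<Longrightarrow> (mu md g1 g2 u \<le> g1) = (u \<le> g1)"
  by (auto simp: mu_def)

lemma mu_asc: "x \<in> {1..g1+g2} \<Longrightarrow> y \<in> {1..g1+g2} \<Longrightarrow> x < y \<Longrightarrow> mu md g1 g2 x < mu md g1 g2 y
   \<Longrightarrow> md \<and> x \<le> g1 \<and> g1 < y"
  by (auto simp: mu_def split: if_splits)

lemma mu_no231: "x \<in> {1..g1+g2} \<Longrightarrow> y \<in> {1..g1+g2} \<Longrightarrow> z \<in> {1..g1+g2} \<Longrightarrow> x < y \<Longrightarrow> y < z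
   \<Longrightarrow> mu md g1 g2 z < mu md g1 g2 x \<Longrightarrow> mu md g1 g2 x < mu md g1 g2 y \<Longrightarrow> False"
  by (auto simp: mu_def split: if_splits)

lemma mu_fix_card: "card {u \<in> {1..g1+g2}. mu md g1 g2 u = u} = fpc g1 g2 md"
proof (cases md)
  case False
  have "{u \<in> {1..g1+g2}. mu md g1 g2 u = u} = {u \<in> {0+1..0+(g1+g2)}. u = 2*0+(g1+g2)+1-u}"
    using False by (auto simp: mu_def)
  thus ?thesis using refl_count(1)[of 0 "g1+g2"] False by (simp add: fpc_def)
next
  case True
  have "{u \<in> {1..g1+g2}. mu md g1 g2 u = u} = {u \<in> {0+1..0+g1}. u = 2*0+g1+1-u} \<union> {u \<in> {g1+1..g1+g2}. u = 2*g1+g2+1-u}"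
    using True by (auto simp: mu_def)
  moreover have "card ({u \<in> {0+1..0+g1}. u = 2*0+g1+1-u} \<union> {u \<in> {g1+1..g1+g2}. u = 2*g1+g2+1-u})
      = card {u \<in> {0+1..0+g1}. u = 2*0+g1+1-u} + card {u \<in> {g1+1..g1+g2}. u = 2*g1+g2+1-u}"
    by (rule card_Un_disjoint) auto
  ultimately show ?thesis using refl_count(1)[of 0 g1] refl_count(1)[of g1 g2] True by (simp add: fpc_def)
qed

lemma mu_two_card: "card {u \<in> {1..g1+g2}. u < mu md g1 g2 u} = tcc g1 g2 md"
proof (cases md)
  case False
  have "{u \<in> {1..g1+g2}. u < mu md g1 g2 u} = {u \<in> {0+1..0+(g1+g2)}. u < 2*0+(g1+g2)+1-u}"
    using False by (auto simp: mu_def)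
  thus ?thesis using refl_count(2)[of 0 "g1+g2"] False by (simp add: tcc_def)
next
  case True
  have "{u \<in> {1..g1+g2}. u < mu md g1 g2 u} = {u \<in> {0+1..0+g1}. u < 2*0+g1+1-u} \<union> {u \<in> {g1+1..g1+g2}. u < 2*g1+g2+1-u}"
    using True by (auto simp: mu_def)
  moreover have "card ({u \<in> {0+1..0+g1}. u < 2*0+g1+1-u} \<union> {u \<in> {g1+1..g1+g2}. u < 2*g1+g2+1-u})
      = card {u \<in> {0+1..0+g1}. u < 2*0+g1+1-u} + card {u \<in> {g1+1..g1+g2}. u < 2*g1+g2+1-u}"
    by (rule card_Un_disjoint) auto
  ultimately show ?thesis using refl_count(2)[of 0 g1] refl_count(2)[of g1 g2] True by (simp add: tcc_def)
qed

end
definition nopeak :: "(nat \<Rightarrow> nat) \<Rightarrow> nat \<Rightarrow> bool" where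
  "nopeak \<beta> k \<longleftrightarrow> (\<forall>x y z. 1 \<le> x \<and> x < y \<and> y < z \<and> z \<le> k \<longrightarrow> \<not> (\<beta> x < \<beta> y \<and> \<beta> z < \<beta> y))"

definition Vp :: "nat \<Rightarrow> (nat \<Rightarrow> nat) set" where
  "Vp k = {\<beta>. \<beta> permutes {1..k} \<and> nopeak \<beta> k}"

lemma finite_Vp: "finite (Vp k)"
proof -
  have "Vp k \<subseteq> {\<beta>. \<beta> permutes {1..k}}" by (auto simp: Vp_def)
  moreover have "finite {\<beta>. \<beta> permutes {1..k}}" by (rule finite_permutations) simp
  ultimately show ?thesis by (rule finite_subset)
qed


definition cm :: "nat \<Rightarrow> nat \<Rightarrow> nat \<Rightarrow> nat" where
  "cm k g1 i = (if i \<le> k + g1 then i - k else i - 2*k)"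
definition dm :: "nat \<Rightarrow> nat \<Rightarrow> nat \<Rightarrow> nat" where
  "dm k g1 u = (if u \<le> g1 then u + k else u + 2*k)"

definition bp :: "nat \<Rightarrow> (nat \<Rightarrow> nat) \<Rightarrow> nat \<Rightarrow> nat \<Rightarrow> bool \<Rightarrow> nat \<Rightarrow> nat" where
  "bp k \<beta> g1 g2 md i = (if i < 1 \<or> 3*k+g1+g2 < i then i
     else if i \<le> k then 3*k+g1+g2+1-i
     else if i \<le> k+g1 then dm k g1 (mu md g1 g2 (cm k g1 i))
     else if i \<le> 2*k+g1 then \<beta> (i-k-g1)
     else if i \<le> 2*k+g1+g2 then dm k g1 (mu md g1 g2 (cm k g1 i))
     else k+g1+inv \<beta> (3*k+g1+g2+1-i))"

locale bld =
  fixes k :: nat and \<beta> :: "nat \<Rightarrow> nat" and g1 g2 :: nat and md :: bool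
  assumes k1: "1 \<le> k" and bperm: "\<beta> permutes {1..k}" and nop: "nopeak \<beta> k"
    and mdc: "md \<longrightarrow> 1 \<le> g1 \<and> 1 \<le> g2"
begin

abbreviation "n \<equiv> 3*k+g1+g2"
abbreviation "p \<equiv> bp k \<beta> g1 g2 md"
abbreviation "isM i \<equiv> (k < i \<and> i \<le> k+g1) \<or> (2*k+g1 < i \<and> i \<le> 2*k+g1+g2)"

lemma b_range: "x \<in> {1..k} \<Longrightarrow> \<beta> x \<in> {1..k}"
  by (metis bperm permutes_in_image)
lemma binv_range: "x \<in> {1..k} \<Longrightarrow> inv \<beta> x \<in> {1..k}"
  by (metis permutes_inv[OF bperm] permutes_in_image)
lemma b_inv1[simp]: "\<beta> (inv \<beta> x) = x"
  using bperm permutes_inverses(1) by fastforce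
lemma b_inv2[simp]: "inv \<beta> (\<beta> x) = x"
  using bperm permutes_inverses(2) by fastforce
lemma b_inj: "\<beta> x = \<beta> y \<longleftrightarrow> x = y"
  by (metis b_inv2)
lemma binv_inj: "inv \<beta> x = inv \<beta> y \<longleftrightarrow> x = y"
  by (metis b_inv1)

lemma pout: "i < 1 \<or> n < i \<Longrightarrow> p i = i" by (simp add: bp_def)
lemma pA: "1 \<le> i \<Longrightarrow> i \<le> k \<Longrightarrow> p i = n+1-i" by (simp add: bp_def)
lemma pB: "k+g1 < i \<Longrightarrow> i \<le> 2*k+g1 \<Longrightarrow> p i = \<beta> (i-k-g1)" by (simp add: bp_def)
lemma pC: "2*k+g1+g2 < i \<Longrightarrow> i \<le> n \<Longrightarrow> p i = k+g1+inv \<beta> (n+1-i)" by (simp add: bp_def)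
lemma pM: "isM i \<Longrightarrow> p i = dm k g1 (mu md g1 g2 (cm k g1 i))" by (auto simp: bp_def)

lemma cm_range: "isM i \<Longrightarrow> cm k g1 i \<in> {1..g1+g2}" by (auto simp: cm_def)
lemma dm_cm: "isM i \<Longrightarrow> dm k g1 (cm k g1 i) = i" by (auto simp: cm_def dm_def)
lemma dm_isM: "u \<in> {1..g1+g2} \<Longrightarrow> isM (dm k g1 u)" by (auto simp: dm_def)
lemma cm_dm: "u \<in> {1..g1+g2} \<Longrightarrow> cm k g1 (dm k g1 u) = u" by (auto simp: cm_def dm_def)
lemma dm_mono: "u < v \<Longrightarrow> dm k g1 u < dm k g1 v" by (auto simp: dm_def)
lemma dm_less_iff: "dm k g1 u < dm k g1 v \<longleftrightarrow> u < v"
  by (auto simp: dm_def)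
lemma dm_le_g1: "dm k g1 u \<le> k + g1 \<longleftrightarrow> u \<le> g1" by (auto simp: dm_def)
lemma cm_le_g1: "isM i \<Longrightarrow> cm k g1 i \<le> g1 \<longleftrightarrow> i \<le> k + g1" by (auto simp: cm_def)
lemma cm_mono: "isM i \<Longrightarrow> isM j \<Longrightarrow> i < j \<Longrightarrow> cm k g1 i < cm k g1 j" by (auto simp: cm_def)

lemma pM_isM: "isM i \<Longrightarrow> isM (p i)"
  using pM dm_isM mu_range[OF mdc] cm_range by metis
lemma pM_inv: "isM i \<Longrightarrow> p (p i) = i"
proof -
  assume i: "isM i"
  have "p (p i) = dm k g1 (mu md g1 g2 (cm k g1 (dm k g1 (mu md g1 g2 (cm k g1 i)))))"
    using pM[OF pM_isM[OF i]] pM[OF i] by simp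
  also have "\<dots> = i" using cm_dm mu_range[OF mdc] mu_inv[OF mdc] cm_range[OF i] dm_cm[OF i] by simp
  finally show ?thesis .
qed

lemma pA_range: "1 \<le> i \<Longrightarrow> i \<le> k \<Longrightarrow> 2*k+g1+g2 < p i \<and> p i \<le> n" using pA by auto
lemma pB_range: "k+g1 < i \<Longrightarrow> i \<le> 2*k+g1 \<Longrightarrow> 1 \<le> p i \<and> p i \<le> k"
proof -
  assume a: "k+g1 < i" "i \<le> 2*k+g1"
  hence "i-k-g1 \<in> {1..k}" by auto
  thus ?thesis using pB[OF a] b_range[of "i-k-g1"] by simp
qed
lemma pC_range: "2*k+g1+g2 < i \<Longrightarrow> i \<le> n \<Longrightarrow> k+g1 < p i \<and> p i \<le> 2*k+g1"
proof -
  assume a: "2*k+g1+g2 < i" "i \<le> n"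
  hence "n+1-i \<in> {1..k}" by auto
  thus ?thesis using pC[OF a] binv_range[of "n+1-i"] by simp
qed

lemma regions: "1 \<le> i \<Longrightarrow> i \<le> n \<Longrightarrow> i \<le> k \<or> isM i \<or> (k+g1 < i \<and> i \<le> 2*k+g1) \<or> 2*k+g1+g2 < i"
  by auto

end


lemma perm_helper:
  assumes "finite S" "inj_on f S" "f ` S \<subseteq> S" "\<And>x. x \<notin> S \<Longrightarrow> f x = x"
  shows "f permutes S"
proof -
  have "f ` S = S" using endo_inj_surj[OF assms(1,3,2)] .
  hence "bij_betw f S S" using assms(2) by (simp add: bij_betw_def)
  thus ?thesis using assms(4) by (intro bij_imp_permutes) auto
qed

context bld begin

lemma reg_cases:
  assumes "1 \<le> i"
  obtains "i \<le> k" | "isM i" | "k+g1 < i \<and> i \<le> 2*k+g1" | "2*k+g1+g2 < i"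
proof -
  consider "i \<le> k" | "k < i \<and> i \<le> k+g1" | "k+g1 < i \<and> i \<le> 2*k+g1" | "2*k+g1 < i \<and> i \<le> 2*k+g1+g2" | "2*k+g1+g2 < i"
    by linarith
  thus ?thesis using that by metis
qed

definition q :: "nat \<Rightarrow> nat" where
  "q v = (if 2*k+g1+g2 < v then n+1-v else if v \<le> k then inv \<beta> v + k + g1
          else if k+g1 < v \<and> v \<le> 2*k+g1 then n+1-\<beta> (v-k-g1) else p v)"

lemma q_p: "i \<in> {1..n} \<Longrightarrow> q (p i) = i"
proof -
  assume i: "i \<in> {1..n}"
  from i have "1 \<le> i" by simp
  thus ?thesis
  proof (cases rule: reg_cases)
    case 1 thus ?thesis using i pA[of i] by (auto simp: q_def)
  next
    case 2
    have "isM (p i)" using pM_isM[OF 2] .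
    hence "\<not> 2*k+g1+g2 < p i" "\<not> p i \<le> k" "\<not> (k+g1 < p i \<and> p i \<le> 2*k+g1)" by auto
    thus ?thesis using pM_inv[OF 2] unfolding q_def by auto
  next
    case 3
    have r: "1 \<le> p i \<and> p i \<le> k" using pB_range 3 by blast
    have "p i = \<beta> (i-k-g1)" using pB 3 by blast
    thus ?thesis using r 3 by (auto simp: q_def)
  next
    case 4
    have r: "k+g1 < p i \<and> p i \<le> 2*k+g1" using pC_range 4 i by auto
    have e: "p i = k+g1+inv \<beta> (n+1-i)" using pC 4 i by auto
    have "q (p i) = n+1-\<beta> (p i-k-g1)" using r k1 by (auto simp: q_def)
    also have "\<dots> = i" using e 4 i by simp
    finally show ?thesis .
  qed
qed

lemma p_maps: "i \<in> {1..n} \<Longrightarrow> p i \<in> {1..n}"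
proof -
  assume i: "i \<in> {1..n}"
  from i have "1 \<le> i" by simp
  thus ?thesis
  proof (cases rule: reg_cases)
    case 1 thus ?thesis using i pA_range[of i] by auto
  next
    case 2 thus ?thesis using pM_isM[OF 2] by auto
  next
    case 3 thus ?thesis using pB_range[of i] by auto
  next
    case 4 thus ?thesis using pC_range[of i] i by auto
  qed
qed

lemma p_permutes: "p permutes {1..n}"
proof (rule perm_helper)
  show "inj_on p {1..n}" by (metis inj_onI q_p)
  show "p ` {1..n} \<subseteq> {1..n}" using p_maps by auto
  show "\<And>x. x \<notin> {1..n} \<Longrightarrow> p x = x" using pout by auto
qed simp

lemma p_231: "avoids231 p n"
  unfolding avoids231_def
proof (intro notI, elim exE conjE)
  fix x y z assume xyz: "1 \<le> x" "x < y" "y < z" "z \<le> n" and v: "p z < p x" "p x < p y"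
  from xyz(1) show False
  proof (cases rule: reg_cases)
    case 1
    have "2*k+g1+g2 < p y" using pA_range[of x] 1 xyz v by auto
    hence "y \<le> k"
      using pB_range[of y] pC_range[of y] pM_isM[of y] xyz by (cases "y \<le> k"; cases "isM y"; auto)
    thus False using pA[of x] pA[of y] xyz v by auto
  next
    case 3
    have "p z \<le> k" using pB_range[of x] 3 v by auto
    hence zB: "k+g1 < z \<and> z \<le> 2*k+g1"
      using pA_range[of z] pC_range[of z] pM_isM[of z] xyz 3 by (cases "z \<le> 2*k+g1"; cases "isM z"; auto)
    hence yB: "k+g1 < y \<and> y \<le> 2*k+g1" using 3 xyz by auto
    have "\<beta> (x-k-g1) < \<beta> (y-k-g1)" "\<beta> (z-k-g1) < \<beta> (y-k-g1)"
      using v pB[of x] pB[of y] pB[of z] 3 yB zB by auto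
    moreover have "1 \<le> x-k-g1" "x-k-g1 < y-k-g1" "y-k-g1 < z-k-g1" "z-k-g1 \<le> k" using 3 yB zB xyz by auto
    ultimately show False using nop unfolding nopeak_def by blast
  next
    case 4
    have yC: "2*k+g1+g2 < y" "2*k+g1+g2 < z" using 4 xyz by auto
    define a1 a2 a3 where "a1 = n+1-x" and "a2 = n+1-y" and "a3 = n+1-z"
    have a: "a1 \<in> {1..k}" "a2 \<in> {1..k}" "a3 \<in> {1..k}" "a3 < a2" "a2 < a1"
      using 4 yC xyz unfolding a1_def a2_def a3_def by auto
    have w: "inv \<beta> a3 < inv \<beta> a1" "inv \<beta> a1 < inv \<beta> a2"
      using v pC[of x] pC[of y] pC[of z] 4 yC xyz unfolding a1_def a2_def a3_def by auto
    have "\<beta> (inv \<beta> a3) < \<beta> (inv \<beta> a1)" "\<beta> (inv \<beta> a2) < \<beta> (inv \<beta> a1)" using a by auto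
    moreover have "1 \<le> inv \<beta> a3" "inv \<beta> a2 \<le> k" using binv_range a by auto
    ultimately show False using nop w unfolding nopeak_def by blast
  next
    case 2
    have pxM: "isM (p x)" using pM_isM[OF 2] .
    have yr: "isM y \<or> 2*k+g1+g2 < y"
    proof (rule ccontr)
      assume "\<not> ?thesis"
      hence "k+g1 < y \<and> y \<le> 2*k+g1" using 2 xyz by auto
      hence "p y \<le> k" using pB_range by blast
      thus False using pxM v by auto
    qed
    show False
    proof (cases "isM y")
      case False
      hence "2*k+g1+g2 < y" "2*k+g1+g2 < z" using yr xyz by auto
      hence "k+g1 < p z" "p y \<le> 2*k+g1" using pC_range[of y] pC_range[of z] xyz by auto
      thus False using pxM v by auto
    next
      case yM: True
      have cx: "cm k g1 x \<in> {1..g1+g2}" "cm k g1 y \<in> {1..g1+g2}" using cm_range 2 yM by auto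
      have asc: "mu md g1 g2 (cm k g1 x) < mu md g1 g2 (cm k g1 y)"
        using v(2) pM[OF 2] pM[OF yM] dm_less_iff by simp
      have cxy: "cm k g1 x < cm k g1 y" using cm_mono 2 yM xyz by auto
      have A: "md \<and> cm k g1 x \<le> g1 \<and> g1 < cm k g1 y" using mu_asc[OF mdc cx cxy asc] .
      consider "isM z" | "k+g1 < z \<and> z \<le> 2*k+g1" | "2*k+g1+g2 < z" using xyz yM by linarith
      thus False
      proof cases
        case 1
        have cz: "cm k g1 z \<in> {1..g1+g2}" using cm_range 1 by auto
        have "cm k g1 y < cm k g1 z" using cm_mono yM 1 xyz by auto
        moreover have "mu md g1 g2 (cm k g1 z) < mu md g1 g2 (cm k g1 x)"
          using v(1) pM[OF 2] pM[OF 1] dm_less_iff by simp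
        ultimately show False using mu_no231[OF mdc cx cz cxy _ _ asc] by blast
      next
        case 2
        have "y \<le> k+g1" using yM 2 xyz by auto
        hence "cm k g1 y \<le> g1" using cm_le_g1 yM by auto
        thus False using A by auto
      next
        case 3
        have "k+g1 < p z" using pC_range[of z] 3 xyz by auto
        hence "k+g1 < p x" using v by auto
        hence "\<not> mu md g1 g2 (cm k g1 x) \<le> g1" using pM[OF 2] dm_le_g1[of "mu md g1 g2 (cm k g1 x)"] by simp
        moreover have "mu md g1 g2 (cm k g1 x) \<le> g1" using mu_blk[OF mdc] A cx by auto
        ultimately show False by blast
      qed
    qed
  qed
qed

end


lemma orb_2: assumes "p (p i) = i" shows "orb p i = {i, p i}"
proof -
  have "(p ^^ m) i \<in> {i, p i}" for m
    by (induction m) (auto simp: assms)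
  moreover have "i = (p ^^ 0) i" "p i = (p ^^ 1) i" by simp_all
  ultimately show ?thesis unfolding orb_def by blast
qed

lemma orb_3: assumes "p (p (p i)) = i" shows "orb p i = {i, p i, p (p i)}"
proof -
  have "(p ^^ m) i \<in> {i, p i, p (p i)}" for m
    by (induction m) (auto simp: assms)
  moreover have "i = (p ^^ 0) i" "p i = (p ^^ 1) i" "p (p i) = (p ^^ 2) i" by (simp_all add: numeral_2_eq_2)
  ultimately show ?thesis unfolding orb_def by blast
qed

lemma card_orb_cases:
  assumes "p (p i) = i \<or> p (p (p i)) = i"
  shows "card (orb p i) = 1 \<longleftrightarrow> p i = i"
    and "card (orb p i) = 2 \<longleftrightarrow> p i \<noteq> i \<and> p (p i) = i"
    and "card (orb p i) = 3 \<longleftrightarrow> p (p i) \<noteq> i"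
proof -
  have c: "card (orb p i) = (if p i = i then 1 else if p (p i) = i then 2 else 3)"
  proof (cases "p (p i) = i")
    case True thus ?thesis using orb_2[of p i] True by auto
  next
    case False
    hence 3: "p (p (p i)) = i" using assms by auto
    moreover have "p i \<noteq> i" "p (p i) \<noteq> p i" using False 3 by metis+
    ultimately show ?thesis using orb_3[of p i] False by auto
  qed
  show "card (orb p i) = 1 \<longleftrightarrow> p i = i" using c by auto
  show "card (orb p i) = 2 \<longleftrightarrow> p i \<noteq> i \<and> p (p i) = i" using c by auto
  show "card (orb p i) = 3 \<longleftrightarrow> p (p i) \<noteq> i" using c by auto
qed

lemma ncyc1_eq:
  assumes "\<forall>i\<in>{1..n}. p (p i) = i \<or> p (p (p i)) = i"
  shows "ncyc 1 p n = card {i\<in>{1..n}. p i = i}"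
proof -
  have "{orb p i | i. i \<in> {1..n} \<and> card (orb p i) = 1} = (\<lambda>i. {i}) ` {i\<in>{1..n}. p i = i}"
  proof (intro equalityI subsetI)
    fix X assume "X \<in> {orb p i | i. i \<in> {1..n} \<and> card (orb p i) = 1}"
    then obtain i where i: "X = orb p i" "i \<in> {1..n}" "card (orb p i) = 1" by blast
    hence "p i = i" using card_orb_cases(1) assms by blast
    thus "X \<in> (\<lambda>i. {i}) ` {i\<in>{1..n}. p i = i}" using i orb_2[of p i] by auto
  next
    fix X assume "X \<in> (\<lambda>i. {i}) ` {i\<in>{1..n}. p i = i}"
    then obtain i where i: "X = {i}" "i \<in> {1..n}" "p i = i" by blast
    thus "X \<in> {orb p i | i. i \<in> {1..n} \<and> card (orb p i) = 1}" using orb_2[of p i] by auto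
  qed
  moreover have "inj_on (\<lambda>i. {i}) {i\<in>{1..n}. p i = i}" by (auto simp: inj_on_def)
  ultimately show ?thesis unfolding ncyc_def by (simp add: card_image)
qed

lemma ncyc2_eq:
  assumes "\<forall>i\<in>{1..n}. p (p i) = i \<or> p (p (p i)) = i" and "\<forall>i\<in>{1..n}. p i \<in> {1..n}"
  shows "ncyc 2 p n = card {i\<in>{1..n}. i < p i \<and> p (p i) = i}"
proof -
  have "{orb p i | i. i \<in> {1..n} \<and> card (orb p i) = 2} = (\<lambda>i. {i, p i}) ` {i\<in>{1..n}. i < p i \<and> p (p i) = i}"
  proof (intro equalityI subsetI)
    fix X assume "X \<in> {orb p i | i. i \<in> {1..n} \<and> card (orb p i) = 2}"
    then obtain i where i: "X = orb p i" "i \<in> {1..n}" "card (orb p i) = 2" by blast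
    hence h: "p i \<noteq> i" "p (p i) = i" using card_orb_cases(2) assms(1) by blast+
    have X: "X = {i, p i}" using i orb_2[of p i] h(2) by simp
    show "X \<in> (\<lambda>i. {i, p i}) ` {i\<in>{1..n}. i < p i \<and> p (p i) = i}"
    proof (cases "i < p i")
      case True thus ?thesis using X h i by auto
    next
      case False
      hence "p i < p (p i)" using h by auto
      moreover have "X = {p i, p (p i)}" using X h by auto
      moreover have "p i \<in> {1..n}" using assms(2) i by auto
      ultimately show ?thesis using h by (auto intro!: image_eqI[where x="p i"])
    qed
  next
    fix X assume "X \<in> (\<lambda>i. {i, p i}) ` {i\<in>{1..n}. i < p i \<and> p (p i) = i}"
    then obtain i where i: "X = {i, p i}" "i \<in> {1..n}" "i < p i" "p (p i) = i" by blast
    have "card (orb p i) = 2" using card_orb_cases(2)[of p i] i by auto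
    thus "X \<in> {orb p i | i. i \<in> {1..n} \<and> card (orb p i) = 2}" using orb_2[of p i] i by auto
  qed
  moreover have "inj_on (\<lambda>i. {i, p i}) {i\<in>{1..n}. i < p i \<and> p (p i) = i}"
  proof (rule inj_onI)
    fix i j assume a: "i \<in> {i\<in>{1..n}. i < p i \<and> p (p i) = i}" "j \<in> {i\<in>{1..n}. i < p i \<and> p (p i) = i}"
      and e: "{i, p i} = {j, p j}"
    show "i = j"
    proof (rule ccontr)
      assume "i \<noteq> j"
      hence "i = p j" "j = p i" using e by auto
      thus False using a by auto
    qed
  qed
  ultimately show ?thesis unfolding ncyc_def by (simp add: card_image)
qed

lemma three_cycles_orb:
  assumes "(a,b,c) \<in> three_cycles p" shows "orb p a = {a,b,c}" "orb p b = {a,b,c}" "orb p c = {a,b,c}"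
    "card {a,b,c} = 3"
proof -
  from assms have t: "a < b" "b < c" "p a = c" "p c = b" "p b = a" by (auto simp: three_cycles_def)
  show "orb p a = {a,b,c}" using orb_3[of p a] t by auto
  show "orb p b = {a,b,c}" using orb_3[of p b] t by auto
  show "orb p c = {a,b,c}" using orb_3[of p c] t by auto
  show "card {a,b,c} = 3" using t by auto
qed

lemma ncyc3_eq:
  assumes "\<forall>i\<in>{1..n}. card (orb p i) = 3 \<longrightarrow> (\<exists>(a,b,c)\<in>three_cycles p. i \<in> {a,b,c})"
    and "\<forall>(a,b,c)\<in>three_cycles p. a \<in> {1..n}"
  shows "ncyc 3 p n = card (three_cycles p)"
proof -
  have "{orb p i | i. i \<in> {1..n} \<and> card (orb p i) = 3} = (\<lambda>(a,b,c). {a,b,c}) ` three_cycles p"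
  proof (intro equalityI subsetI)
    fix X assume "X \<in> {orb p i | i. i \<in> {1..n} \<and> card (orb p i) = 3}"
    then obtain i where i: "X = orb p i" "i \<in> {1..n}" "card (orb p i) = 3" by blast
    then obtain a b c where t: "(a,b,c) \<in> three_cycles p" "i \<in> {a,b,c}" using assms(1) by blast
    from t(2) have "i = a \<or> i = b \<or> i = c" by simp
    hence "X = {a,b,c}" using three_cycles_orb[OF t(1)] i(1) by (elim disjE) simp_all
    thus "X \<in> (\<lambda>(a,b,c). {a,b,c}) ` three_cycles p" using t(1) by (intro image_eqI[where x="(a,b,c)"]) simp_all
  next
    fix X assume "X \<in> (\<lambda>(a,b,c). {a,b,c}) ` three_cycles p"
    then obtain a b c where t: "(a,b,c) \<in> three_cycles p" "X = {a,b,c}" by auto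
    have "a \<in> {1..n}" using assms(2) t(1) by blast
    moreover have "X = orb p a" "card (orb p a) = 3" using three_cycles_orb[OF t(1)] t(2) by simp_all
    ultimately show "X \<in> {orb p i | i. i \<in> {1..n} \<and> card (orb p i) = 3}" by blast
  qed
  moreover have "inj_on (\<lambda>(a,b,c). {a,b,c}) (three_cycles p)"
  proof (rule inj_onI)
    fix x y assume xy: "x \<in> three_cycles p" "y \<in> three_cycles p"
      and e0: "(\<lambda>(a,b,c). {a,b,c}) x = (\<lambda>(a,b,c). {a,b,c}) y"
    obtain a b c where xx: "x = (a,b,c)" by (cases x) auto
    obtain a' b' c' where yy: "y = (a',b',c')" by (cases y) auto
    have e: "{a,b,c} = {a',b',c'}" using e0 xx yy by simp
    from xy xx yy have o: "a < b" "b < c" "p a = c" "p c = b" "a' < b'" "b' < c'" "p a' = c'" "p c' = b'"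
      by (auto simp: three_cycles_def)
    have "a = Min {a,b,c}" "a' = Min {a',b',c'}" using o by auto
    hence "a = a'" using e by simp
    thus "x = y" using o xx yy by auto
  qed
  ultimately show ?thesis unfolding ncyc_def by (simp add: card_image)
qed


context bld begin

lemma dm_eq_iff: "dm k g1 u = dm k g1 v \<longleftrightarrow> u = v" by (auto simp: dm_def)

lemma p3: assumes "a \<in> {1..k}"
  shows "p a = n+1-a" "p (n+1-a) = k+g1+inv \<beta> a" "p (k+g1+inv \<beta> a) = a"
proof -
  show "p a = n+1-a" using pA assms by auto
  show "p (n+1-a) = k+g1+inv \<beta> a" using pC[of "n+1-a"] assms by auto
  have "inv \<beta> a \<in> {1..k}" using binv_range assms by blast
  thus "p (k+g1+inv \<beta> a) = a" using pB[of "k+g1+inv \<beta> a"] by auto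
qed

lemma T0_props: assumes "a \<in> {1..k}"
  shows "a < k+g1+inv \<beta> a" "k+g1+inv \<beta> a < n+1-a" "k+g1+inv \<beta> a \<le> 2*k+g1" "2*k+g1+g2 < n+1-a"
  using binv_range[OF assms] assms by auto

lemma tc_eq: "three_cycles p = (\<lambda>a. (a, k+g1+inv \<beta> a, n+1-a)) ` {1..k}"
proof (intro equalityI subsetI)
  fix x assume "x \<in> three_cycles p"
  then obtain a b c where x: "x = (a,b,c)" "a < b" "b < c" "p a = c" "p c = b" "p b = a"
    by (cases x) (auto simp: three_cycles_def)
  have "\<not> (a < 1 \<or> n < a)"
  proof
    assume "a < 1 \<or> n < a"
    hence "p a = a" by (rule pout)
    thus False using x by simp
  qed
  hence a1: "1 \<le> a" "a \<le> n" by linarith+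
  have "a \<le> k"
  proof (rule ccontr)
    assume nk: "\<not> a \<le> k"
    from a1(1) show False
    proof (cases rule: reg_cases)
      case 2 thus False using pM_inv[OF 2] x by auto
    next
      case 3 thus False using pB_range[of a] x by auto
    next
      case 4 thus False using pC_range[of a] x a1 by auto
    qed (use nk in auto)
  qed
  hence "a \<in> {1..k}" using a1 by auto
  thus "x \<in> (\<lambda>a. (a, k+g1+inv \<beta> a, n+1-a)) ` {1..k}" using x p3[of a] by auto
next
  fix x assume "x \<in> (\<lambda>a. (a, k+g1+inv \<beta> a, n+1-a)) ` {1..k}"
  then obtain a where a: "a \<in> {1..k}" "x = (a, k+g1+inv \<beta> a, n+1-a)" by auto
  thus "x \<in> three_cycles p" using p3[OF a(1)] T0_props[OF a(1)] by (auto simp: three_cycles_def)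
qed

lemma card_tc: "card (three_cycles p) = k"
proof -
  have "inj_on (\<lambda>a. (a, k+g1+inv \<beta> a, n+1-a)) {1..k}" by (auto simp: inj_on_def)
  thus ?thesis unfolding tc_eq by (simp add: card_image)
qed

lemma nonM_in: assumes "i \<in> {1..n}" "\<not> isM i"
  shows "\<exists>a\<in>{1..k}. i = a \<or> i = k+g1+inv \<beta> a \<or> i = n+1-a"
proof -
  from assms(1) have "1 \<le> i" by simp
  thus ?thesis
  proof (cases rule: reg_cases)
    case 1 thus ?thesis using assms by auto
  next
    case 2 thus ?thesis using assms by auto
  next
    case 3
    hence "i-k-g1 \<in> {1..k}" by auto
    hence "\<beta> (i-k-g1) \<in> {1..k}" by (rule b_range)
    moreover have "i = k+g1+inv \<beta> (\<beta> (i-k-g1))" using 3 by simp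
    ultimately show ?thesis by blast
  next
    case 4
    hence "n+1-i \<in> {1..k}" "i = n+1-(n+1-i)" using assms by auto
    thus ?thesis by blast
  qed
qed

lemma p_H: "\<forall>i\<in>{1..n}. p (p i) = i \<or> p (p (p i)) = i"
proof
  fix i assume i: "i \<in> {1..n}"
  show "p (p i) = i \<or> p (p (p i)) = i"
  proof (cases "isM i")
    case True thus ?thesis using pM_inv by auto
  next
    case False
    then obtain a where a: "a \<in> {1..k}" "i = a \<or> i = k+g1+inv \<beta> a \<or> i = n+1-a" using nonM_in i by blast
    thus ?thesis using p3[OF a(1)] by auto
  qed
qed

lemma nonM_not2: assumes "i \<in> {1..n}" "\<not> isM i" shows "p (p i) \<noteq> i" "p i \<noteq> i"
proof -
  obtain a where a: "a \<in> {1..k}" "i = a \<or> i = k+g1+inv \<beta> a \<or> i = n+1-a" using nonM_in assms by blast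
  show "p (p i) \<noteq> i" "p i \<noteq> i" using a(2) p3[OF a(1)] T0_props[OF a(1)] by auto
qed

lemma fix_set: "{i\<in>{1..n}. p i = i} = dm k g1 ` {u\<in>{1..g1+g2}. mu md g1 g2 u = u}"
proof (intro equalityI subsetI)
  fix i assume i: "i \<in> {i\<in>{1..n}. p i = i}"
  from i have i1: "i \<in> {1..n}" and i2: "p i = i" by auto
  have M: "isM i"
  proof (rule ccontr)
    assume "\<not> isM i"
    from nonM_not2(2)[OF i1 this] i2 show False by simp
  qed
  have e1: "p i = dm k g1 (mu md g1 g2 (cm k g1 i))" by (rule pM[OF M])
  have "dm k g1 (mu md g1 g2 (cm k g1 i)) = dm k g1 (cm k g1 i)"
    unfolding e1[symmetric] i2 dm_cm[OF M] ..
  hence "mu md g1 g2 (cm k g1 i) = cm k g1 i" by (simp only: dm_eq_iff)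
  thus "i \<in> dm k g1 ` {u\<in>{1..g1+g2}. mu md g1 g2 u = u}" using dm_cm[OF M] cm_range[OF M]
    by (intro image_eqI[where x="cm k g1 i"]) auto
next
  fix i assume "i \<in> dm k g1 ` {u\<in>{1..g1+g2}. mu md g1 g2 u = u}"
  then obtain u where u: "u \<in> {1..g1+g2}" "mu md g1 g2 u = u" "i = dm k g1 u" by auto
  have M: "isM i" using dm_isM u by auto
  thus "i \<in> {i\<in>{1..n}. p i = i}" using pM[OF M] u cm_dm by auto
qed

lemma two_set: "{i\<in>{1..n}. i < p i \<and> p (p i) = i} = dm k g1 ` {u\<in>{1..g1+g2}. u < mu md g1 g2 u}"
proof (intro equalityI subsetI)
  fix i assume i: "i \<in> {i\<in>{1..n}. i < p i \<and> p (p i) = i}"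
  from i have i1: "i \<in> {1..n}" and i2: "p (p i) = i" by auto
  have M: "isM i"
  proof (rule ccontr)
    assume "\<not> isM i"
    from nonM_not2(1)[OF i1 this] i2 show False by simp
  qed
  have "i < p i" using i by simp
  have e1: "p i = dm k g1 (mu md g1 g2 (cm k g1 i))" by (rule pM[OF M])
  have "dm k g1 (cm k g1 i) < dm k g1 (mu md g1 g2 (cm k g1 i))"
    unfolding e1[symmetric] dm_cm[OF M] by fact
  hence "cm k g1 i < mu md g1 g2 (cm k g1 i)" by (simp only: dm_less_iff)
  thus "i \<in> dm k g1 ` {u\<in>{1..g1+g2}. u < mu md g1 g2 u}" using dm_cm[OF M] cm_range[OF M]
    by (intro image_eqI[where x="cm k g1 i"]) auto
next
  fix i assume "i \<in> dm k g1 ` {u\<in>{1..g1+g2}. u < mu md g1 g2 u}"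
  then obtain u where u: "u \<in> {1..g1+g2}" "u < mu md g1 g2 u" "i = dm k g1 u" by auto
  have M: "isM i" using dm_isM u by auto
  have "i < p i" using pM[OF M] u cm_dm dm_less_iff by auto
  thus "i \<in> {i\<in>{1..n}. i < p i \<and> p (p i) = i}" using pM_inv[OF M] M by auto
qed

lemma dm_inj: "inj_on (dm k g1) A" by (rule inj_onI) (simp only: dm_eq_iff)

lemma ncyc1_p: "ncyc 1 p n = fpc g1 g2 md"
  using ncyc1_eq[OF p_H] fix_set card_image[OF dm_inj] mu_fix_card[OF mdc] by simp

lemma ncyc2_p: "ncyc 2 p n = tcc g1 g2 md"
  using ncyc2_eq[OF p_H] p_maps two_set card_image[OF dm_inj] mu_two_card[OF mdc] by simp

lemma orb3_in: "\<forall>i\<in>{1..n}. card (orb p i) = 3 \<longrightarrow> (\<exists>(a,b,c)\<in>three_cycles p. i \<in> {a,b,c})"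
proof (intro ballI impI)
  fix i assume i: "i \<in> {1..n}" "card (orb p i) = 3"
  hence "p (p i) \<noteq> i" using card_orb_cases(3) p_H by blast
  hence "\<not> isM i" using pM_inv by auto
  then obtain a where a: "a \<in> {1..k}" "i = a \<or> i = k+g1+inv \<beta> a \<or> i = n+1-a" using nonM_in i by blast
  hence "(a, k+g1+inv \<beta> a, n+1-a) \<in> three_cycles p" using tc_eq by auto
  thus "\<exists>(a,b,c)\<in>three_cycles p. i \<in> {a,b,c}" using a(2) by auto
qed

lemma ncyc3_p: "ncyc 3 p n = k"
proof -
  have "\<forall>(a,b,c)\<in>three_cycles p. a \<in> {1..n}" using tc_eq by auto
  thus ?thesis using ncyc3_eq[OF orb3_in] card_tc by simp
qed

lemma p_Rset: assumes "(g1,g2,md) \<in> Qset" shows "p \<in> Rset n"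
proof -
  have q: "1 \<le> fpc g1 g2 md" "1 \<le> tcc g1 g2 md" using assms by (auto simp: Qset_def)
  have c123: "\<forall>i\<in>{1..n}. card (orb p i) \<in> {1,2,3}"
  proof
    fix i assume "i \<in> {1..n}"
    hence h: "p (p i) = i \<or> p (p (p i)) = i" using p_H by blast
    show "card (orb p i) \<in> {1,2,3}" using card_orb_cases[OF h] by auto
  qed
  have T: "(1, k+g1+inv \<beta> 1, n) \<in> three_cycles p" using tc_eq k1 by force
  have cr: "crossing_3cycles p (three_cycles p)"
    unfolding crossing_3cycles_def
  proof (intro conjI)
    show "three_cycles p \<noteq> {}" using T by auto
    show "\<forall>(a,b,c)\<in>three_cycles p. \<forall>(a',b',c')\<in>three_cycles p. \<forall>(a'',b'',c'')\<in>three_cycles p. a < b' \<and> b' < c''"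
      unfolding tc_eq using T0_props binv_range by fastforce
  qed simp
  have "1 \<in> blockA (three_cycles p)" using T unfolding blockA_def by force
  moreover have "n \<in> blockC (three_cycles p)" using T unfolding blockC_def by force
  ultimately show ?thesis unfolding Rset_def
    using p_permutes p_231 c123 ncyc1_p ncyc2_p q orb3_in cr by auto
qed

end


lemma dec_lin:
  fixes f :: "nat \<Rightarrow> nat"
  assumes r: "\<And>x. a \<le> x \<Longrightarrow> x \<le> a+L \<Longrightarrow> c \<le> f x \<and> f x \<le> c + L"
    and d: "\<And>x y. a \<le> x \<Longrightarrow> x < y \<Longrightarrow> y \<le> a+L \<Longrightarrow> f y < f x"
    and x: "a \<le> x" "x \<le> a+L"
  shows "f x = c + L - (x - a)"
proof -
  have up: "j \<le> L \<Longrightarrow> f (a+j) \<le> c + L - j" for j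
  proof (induction j)
    case 0 thus ?case using r[of a] by auto
  next
    case (Suc j)
    hence "f (a + Suc j) < f (a + j)" using d[of "a+j" "a+Suc j"] by auto
    thus ?case using Suc by auto
  qed
  have lo: "j \<le> L \<Longrightarrow> c + j \<le> f (a+L-j)" for j
  proof (induction j)
    case 0 thus ?case using r[of "a+L"] by auto
  next
    case (Suc j)
    hence "f (a+L-Suc j) > f (a+L-j)" using d[of "a+L-Suc j" "a+L-j"] by auto
    thus ?case using Suc by auto
  qed
  obtain j where j: "x = a + j" "j \<le> L" using x by (metis add_le_cancel_left le_Suc_ex)
  have "f x \<le> c + L - j" using up j by auto
  moreover have "c + (L - j) \<le> f x" using lo[of "L-j"] j by auto
  ultimately show ?thesis using j by auto
qed

locale inS =
  fixes n :: nat and p :: "nat \<Rightarrow> nat"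
  assumes n1: "1 \<le> n" and R: "p \<in> Rset n"
begin

abbreviation "T \<equiv> three_cycles p"
definition "A = fst ` T"
definition "B = (fst \<circ> snd) ` T"
definition "C = (snd \<circ> snd) ` T"
definition "M = {1..n} - (A \<union> B \<union> C)"

lemma perm: "p permutes {1..n}" using R by (simp add: Rset_def)
lemma av: "avoids231 p n" using R by (simp add: Rset_def)
lemma no231: "1 \<le> x \<Longrightarrow> x < y \<Longrightarrow> y < z \<Longrightarrow> z \<le> n \<Longrightarrow> p z < p x \<Longrightarrow> p x < p y \<Longrightarrow> False"
  using av unfolding avoids231_def by blast
lemma orbc: "i \<in> {1..n} \<Longrightarrow> card (orb p i) \<in> {1,2,3}" using R by (simp add: Rset_def)
lemma tri: "i \<in> {1..n} \<Longrightarrow> card (orb p i) = 3 \<Longrightarrow> \<exists>(a,b,c)\<in>T. i \<in> {a,b,c}"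
  using R by (simp add: Rset_def)
lemma cr: "crossing_3cycles p T" using R by (simp add: Rset_def)
lemma oneA: "1 \<in> blockA T" using R by (simp add: Rset_def)
lemma nC: "n \<in> blockC T" using R by (simp add: Rset_def)
lemma ncyc12: "1 \<le> ncyc 1 p n" "1 \<le> ncyc 2 p n" using R by (simp_all add: Rset_def)

lemma p_in: "i \<in> {1..n} \<Longrightarrow> p i \<in> {1..n}" by (metis perm permutes_in_image)
lemma p_out: "i \<notin> {1..n} \<Longrightarrow> p i = i" by (metis perm permutes_not_in)
lemma p_inj: "p x = p y \<longleftrightarrow> x = y" using perm by (metis permutes_inj injD)

lemma Tp: "(a,b,c) \<in> T \<Longrightarrow> a < b \<and> b < c \<and> p a = c \<and> p c = b \<and> p b = a"
  by (simp add: three_cycles_def)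

lemma T_in: assumes "(a,b,c) \<in> T" shows "a \<in> {1..n}" "b \<in> {1..n}" "c \<in> {1..n}"
proof -
  have t: "a < b" "b < c" "p a = c" "p c = b" "p b = a" using Tp[OF assms] by auto
  show "a \<in> {1..n}" using p_out[of a] t by force
  thus "c \<in> {1..n}" using p_in t by metis
  thus "b \<in> {1..n}" using p_in t by metis
qed

lemma crT: "(a,b,c) \<in> T \<Longrightarrow> (a',b',c') \<in> T \<Longrightarrow> (a'',b'',c'') \<in> T \<Longrightarrow> a < b' \<and> b' < c''"
  using cr unfolding crossing_3cycles_def by fast

lemma inA: "a \<in> A \<longleftrightarrow> (\<exists>b c. (a,b,c) \<in> T)" by (force simp: A_def)
lemma inB: "b \<in> B \<longleftrightarrow> (\<exists>a c. (a,b,c) \<in> T)" by (force simp: B_def)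
lemma inC: "c \<in> C \<longleftrightarrow> (\<exists>a b. (a,b,c) \<in> T)" by (force simp: C_def)

lemma AB: "a \<in> A \<Longrightarrow> b \<in> B \<Longrightarrow> a < b" using crT inA inB by blast
lemma BC: "b \<in> B \<Longrightarrow> c \<in> C \<Longrightarrow> b < c" using crT inB inC by blast
lemma AC: "a \<in> A \<Longrightarrow> c \<in> C \<Longrightarrow> a < c" using AB BC inA inB by (meson order.strict_trans)

lemma T_ne: "T \<noteq> {}" using cr by (simp add: crossing_3cycles_def)
lemma finT: "finite T"
proof -
  have "T \<subseteq> {1..n} \<times> {1..n} \<times> {1..n}" using T_in by auto
  thus ?thesis by (rule finite_subset) auto
qed

lemma A_sub: "A \<subseteq> {1..n}" using T_in inA by blast
lemma B_sub: "B \<subseteq> {1..n}" using T_in inB by blast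
lemma C_sub: "C \<subseteq> {1..n}" using T_in inC by blast

lemma pA: "a \<in> A \<Longrightarrow> p a \<in> C" using Tp inA inC by blast
lemma pB: "b \<in> B \<Longrightarrow> p b \<in> A" using Tp inA inB by blast
lemma pC: "c \<in> C \<Longrightarrow> p c \<in> B" using Tp inB inC by blast
lemma ppA: "a \<in> A \<Longrightarrow> (a, p (p a), p a) \<in> T" using Tp inA by fastforce
lemma ppB: "b \<in> B \<Longrightarrow> (p b, b, p (p b)) \<in> T" using Tp inB by fastforce
lemma ppC: "c \<in> C \<Longrightarrow> (p (p c), p c, c) \<in> T" using Tp inC by fastforce

lemma orb_ge3: assumes i: "i \<in> {1..n}" and "p (p i) \<noteq> i" shows "3 \<le> card (orb p i)"
proof -
  have sub: "orb p i \<subseteq> {1..n}"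
  proof
    fix x assume "x \<in> orb p i"
    then obtain m where "x = (p ^^ m) i" by (auto simp: orb_def)
    moreover have "(p ^^ m) i \<in> {1..n}" for m by (induction m) (use i p_in in auto)
    ultimately show "x \<in> {1..n}" by simp
  qed
  have "(p^^0) i \<in> orb p i" "(p^^1) i \<in> orb p i" "(p^^2) i \<in> orb p i" unfolding orb_def by blast+
  hence "{i, p i, p (p i)} \<subseteq> orb p i" by (simp add: numeral_2_eq_2)
  moreover have "card {i, p i, p (p i)} = 3" using assms(2) p_inj by (metis card_3_iff)
  ultimately show ?thesis using sub by (metis card_mono finite_atLeastAtMost finite_subset)
qed

lemma M_inv: "i \<in> M \<Longrightarrow> p (p i) = i"
proof (rule ccontr)
  assume i: "i \<in> M" "p (p i) \<noteq> i"
  hence i1: "i \<in> {1..n}" by (simp add: M_def)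
  have "card (orb p i) = 3" using orb_ge3[OF i1 i(2)] orbc[OF i1] by auto
  then obtain a b c where "(a,b,c) \<in> T" "i \<in> {a,b,c}" using tri[OF i1] by blast
  hence "i \<in> A \<union> B \<union> C" using inA inB inC by blast
  thus False using i by (simp add: M_def)
qed

lemma M_p: "i \<in> M \<Longrightarrow> p i \<in> M"
proof -
  assume i: "i \<in> M"
  have pi: "p i \<in> {1..n}" using p_in i by (simp add: M_def)
  have "p i \<notin> A \<union> B \<union> C"
  proof
    assume "p i \<in> A \<union> B \<union> C"
    hence "p (p i) \<in> A \<union> B \<union> C" using pA pB pC by blast
    thus False using M_inv[OF i] i by (simp add: M_def)
  qed
  thus ?thesis using pi by (simp add: M_def)
qed

lemma regs: "i \<in> {1..n} \<Longrightarrow> i \<in> A \<or> i \<in> B \<or> i \<in> C \<or> i \<in> M" by (auto simp: M_def)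
lemma M_notA: "i \<in> M \<Longrightarrow> i \<notin> A" and M_notB: "i \<in> M \<Longrightarrow> i \<notin> B" and M_notC: "i \<in> M \<Longrightarrow> i \<notin> C"
  and M_in: "i \<in> M \<Longrightarrow> i \<in> {1..n}"
  by (auto simp: M_def)

lemma finA: "finite A" and finB: "finite B" and finC: "finite C"
  using finT by (simp_all add: A_def B_def C_def)
lemma neA: "A \<noteq> {}" and neB: "B \<noteq> {}" and neC: "C \<noteq> {}"
  using T_ne by (simp_all add: A_def B_def C_def)

lemma oneA': "1 \<in> A" using oneA by (force simp: blockA_def A_def)
lemma nC': "n \<in> C" using nC by (force simp: blockC_def C_def)

lemma A_dec: assumes "a \<in> A" "a' \<in> A" "a < a'" shows "p a' < p a"
proof (rule ccontr)
  assume "\<not> p a' < p a"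
  moreover have "p a' \<noteq> p a" using assms p_inj by auto
  ultimately have lt: "p a < p a'" by auto
  obtain b where b: "b \<in> B" using neB by auto
  have "p b \<in> A" using pB b by auto
  hence "p b < p a" using AC pA assms(1) by blast
  moreover have "a' < b" using AB assms(2) b by auto
  moreover have "1 \<le> a" "b \<le> n" using A_sub B_sub assms b by auto
  ultimately show False using no231[of a a' b] lt assms(3) by auto
qed

end


context inS begin

lemma b_of_1: "p (p (p 1)) = 1" "p (p 1) \<in> B"
  using ppA[OF oneA'] Tp inB by blast+

lemma M_gt_A: assumes i: "i \<in> M" and a: "a \<in> A" shows "a < i"
proof (rule ccontr)
  assume "\<not> a < i"
  moreover have "a \<noteq> i" using i a M_notA by auto
  ultimately have ia: "i < a" by auto
  have jM: "p i \<in> M" using M_p i by auto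
  have pa: "p a \<in> C" using pA a by auto
  have "p i \<noteq> p a" using jM pa M_notC by auto
  hence "p i < p a \<or> p a < p i" by auto
  thus False
  proof
    assume lt: "p i < p a"
    define b1 where "b1 = p (p 1)"
    have b1: "b1 \<in> B" "p b1 = 1" using b_of_1 b1_def by auto
    have "1 \<le> i" using M_in[OF i] by auto
    moreover have "a < b1" using AB a b1 by auto
    moreover have "b1 \<le> n" using B_sub b1 by auto
    moreover have "p b1 < p i"
    proof -
      have "p i \<noteq> 1" using jM M_notA oneA' by metis
      moreover have "1 \<le> p i" using M_in[OF jM] by auto
      ultimately show ?thesis using b1 by auto
    qed
    ultimately show False using no231[of i a b1] ia lt by auto
  next
    assume lt: "p a < p i"
    have t: "(a, p (p a), p a) \<in> T" using ppA a by auto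
    hence ba: "p (p a) \<in> B" "p (p (p a)) = a" using inB Tp by blast+
    have "p (p a) < p a" using BC ba pa by auto
    moreover have "1 \<le> p (p a)" "p i \<le> n" using B_sub ba M_in[OF jM] by auto
    moreover have "p (p i) < p (p (p a))" using M_inv[OF i] ba ia by simp
    moreover have "p (p (p a)) < p (p a)" using ba AB a by auto
    ultimately show False using no231[of "p (p a)" "p a" "p i"] lt by auto
  qed
qed

lemma M_lt_C: assumes i: "i \<in> M" and c: "c \<in> C" shows "i < c"
proof (rule ccontr)
  assume "\<not> i < c"
  moreover have "c \<noteq> i" using i c M_notC by auto
  ultimately have ci: "c < i" by auto
  have jM: "p i \<in> M" using M_p i by auto
  have t: "(p (p c), p c, c) \<in> T" using ppC c by auto
  hence ac: "p (p c) \<in> A" "p (p (p c)) = c" using inA Tp by blast+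
  have pcB: "p c \<in> B" using pC c by auto
  have "p i \<noteq> c" using jM c M_notC by auto
  hence "c < p i \<or> p i < c" by auto
  thus False
  proof
    assume lt: "c < p i"
    have "i \<noteq> n" using i nC' M_notC by auto
    hence "i < n" using M_in[OF i] by auto
    moreover have "p (p c) < i" using M_gt_A i ac by auto
    moreover have "1 \<le> p (p c)" using A_sub ac by auto
    moreover have "p n < c" using BC pC nC' pcB c
      by (meson pC nC')
    ultimately show False using no231[of "p (p c)" i n] lt ac by auto
  next
    assume lt: "p i < c"
    have "p (p c) < p i" using M_gt_A jM ac by auto
    moreover have "1 \<le> p (p c)" "c \<le> n" using A_sub ac C_sub c by auto
    moreover have "p c < c" using BC pcB c by auto
    moreover have "c < p (p i)" using M_inv[OF i] ci by simp
    ultimately show False using no231[of "p (p c)" "p i" c] lt ac by auto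
  qed
qed

lemma M_not_between_B: assumes i: "i \<in> M" and bx: "bx \<in> B" and bz: "bz \<in> B"
  and lt: "bx < i" "i < bz" shows False
proof -
  have u: "p bx \<in> A" and v: "p bz \<in> A" using pB bx bz by auto
  have "p bx \<noteq> p bz" using p_inj lt by auto
  hence "p bz < p bx \<or> p bx < p bz" by auto
  thus False
  proof
    assume vu: "p bz < p bx"
    have "p bx < p i" using M_gt_A[OF M_p[OF i] u] .
    moreover have "1 \<le> bx" "bz \<le> n" using B_sub bx bz by auto
    ultimately show False using no231[of bx i bz] vu lt by auto
  next
    assume uv: "p bx < p bz"
    have cy: "p (p bz) < p (p bx)" using A_dec[OF u v uv] .
    have tx: "(p bx, bx, p (p bx)) \<in> T" by (rule ppB[OF bx])
    have ty: "(p bz, bz, p (p bz)) \<in> T" by (rule ppB[OF bz])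
    have px: "p (p (p bx)) = bx" using Tp[OF tx] by simp
    have py: "p (p (p bz)) = bz" using Tp[OF ty] by simp
    have cyC: "p (p bz) \<in> C" using inC ty by blast
    have cxC: "p (p bx) \<in> C" using inC tx by blast
    have "p i < p (p bz)" using M_lt_C[OF M_p[OF i] cyC] .
    moreover have "1 \<le> p i" using M_in[OF M_p[OF i]] by auto
    moreover have "p (p bx) \<le> n" using C_sub cxC by auto
    moreover have "p (p (p bx)) < p (p i)" using px M_inv[OF i] lt by simp
    moreover have "p (p i) < p (p (p bz))" using py M_inv[OF i] lt by simp
    ultimately show False using no231[of "p i" "p (p bz)" "p (p bx)"] cy by auto
  qed
qed

definition "k = card T"
definition "blo = Min B"

lemma card_ABC: "card A = k" "card B = k" "card C = k"
proof -
  have "inj_on fst T" by (rule inj_onI) (metis Tp prod.collapse)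
  thus "card A = k" unfolding A_def k_def by (simp add: card_image)
  have "inj_on (fst \<circ> snd) T" by (rule inj_onI) (metis Tp prod.collapse comp_apply)
  thus "card B = k" unfolding B_def k_def by (rule card_image)
  have "inj_on (snd \<circ> snd) T" by (rule inj_onI) (metis Tp prod.collapse comp_apply)
  thus "card C = k" unfolding C_def k_def by (rule card_image)
qed

lemma A_eq: "A = {1..k}"
proof -
  define al where "al = Max A"
  have alA: "al \<in> A" using al_def finA neA by simp
  have "A \<subseteq> {1..al}" using A_sub al_def finA by auto
  moreover have "{1..al} \<subseteq> A"
  proof
    fix i assume i: "i \<in> {1..al}"
    hence "i \<in> {1..n}" using alA A_sub by auto
    moreover have "i \<notin> B" using AB alA i by fastforce
    moreover have "i \<notin> C" using AC alA i by fastforce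
    moreover have "i \<notin> M" using M_gt_A alA i by fastforce
    ultimately show "i \<in> A" using regs by blast
  qed
  ultimately have "A = {1..al}" by auto
  thus ?thesis using card_ABC(1) by simp
qed

lemma C_eq: "C = {n+1-k..n}"
proof -
  define ga where "ga = Min C"
  have gaC: "ga \<in> C" using ga_def finC neC by simp
  have "C \<subseteq> {ga..n}" using C_sub ga_def finC by auto
  moreover have "{ga..n} \<subseteq> C"
  proof
    fix i assume i: "i \<in> {ga..n}"
    hence "i \<in> {1..n}" using gaC C_sub by auto
    moreover have "i \<notin> B" using BC gaC i by fastforce
    moreover have "i \<notin> A" using AC gaC i by fastforce
    moreover have "i \<notin> M" using M_lt_C gaC i by fastforce
    ultimately show "i \<in> C" using regs by blast
  qed
  ultimately have "C = {ga..n}" by auto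
  moreover hence "n + 1 - ga = k" using card_ABC(3) by simp
  moreover have "ga \<le> n" using gaC C_sub by auto
  ultimately show ?thesis by auto
qed

lemma B_eq: "B = {blo..blo+k-1}"
proof -
  define bh where "bh = Max B"
  have bhB: "bh \<in> B" using bh_def finB neB by simp
  have bloB: "blo \<in> B" using blo_def finB neB by simp
  have "B \<subseteq> {blo..bh}" using blo_def bh_def finB by auto
  moreover have "{blo..bh} \<subseteq> B"
  proof
    fix i assume i: "i \<in> {blo..bh}"
    hence "i \<in> {1..n}" using bhB bloB B_sub by auto
    moreover have "i \<notin> A" using AB bloB i by fastforce
    moreover have "i \<notin> C" using BC bhB i by fastforce
    moreover have "i \<notin> M"
    proof
      assume iM: "i \<in> M"
      hence "i \<noteq> blo" "i \<noteq> bh" using bloB bhB M_notB by auto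
      thus False using M_not_between_B[OF iM bloB bhB] i by auto
    qed
    ultimately show "i \<in> B" using regs by blast
  qed
  ultimately have "B = {blo..bh}" by auto
  moreover hence "bh + 1 - blo = k" using card_ABC(2) by simp
  moreover have "blo \<le> bh" using bloB bhB blo_def finB by auto
  ultimately show ?thesis by auto
qed

lemma k1: "1 \<le> k" using card_ABC(1) neA finA by (metis One_nat_def Suc_leI card_gt_0_iff)

lemma blo_bounds: "k < blo" "blo + k - 1 < n + 1 - k"
proof -
  have bloB: "blo \<in> B" using blo_def finB neB by simp
  show "k < blo" using AB[of k blo] A_eq bloB k1 by auto
  have "blo + k - 1 \<in> B" using B_eq k1 by auto
  moreover have "n + 1 - k \<in> C" using C_eq k1 n1 card_ABC(3) C_sub
    by (metis atLeastAtMost_iff le_refl neC atLeastatMost_empty_iff2)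
  ultimately show "blo + k - 1 < n + 1 - k" using BC by auto
qed

end


lemma mid_struct:
  fixes \<nu> :: "nat \<Rightarrow> nat" and g1 g2 :: nat
  assumes rng: "\<And>u. u \<in> {1..g1+g2} \<Longrightarrow> \<nu> u \<in> {1..g1+g2}"
    and inv: "\<And>u. u \<in> {1..g1+g2} \<Longrightarrow> \<nu> (\<nu> u) = u"
    and dec1: "\<And>x y. 1 \<le> x \<Longrightarrow> x < y \<Longrightarrow> y \<le> g1 \<Longrightarrow> \<nu> y < \<nu> x"
    and M2: "\<And>x y. 1 \<le> x \<Longrightarrow> x < y \<Longrightarrow> y \<le> g1+g2 \<Longrightarrow> \<nu> x < \<nu> y \<Longrightarrow> \<nu> x \<le> g1"
    and no231: "\<And>x y z. 1 \<le> x \<Longrightarrow> x < y \<Longrightarrow> y < z \<Longrightarrow> z \<le> g1+g2 \<Longrightarrow> \<nu> z < \<nu> x \<Longrightarrow> \<nu> x < \<nu> y \<Longrightarrow> False"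
  shows "\<exists>md. (md \<longrightarrow> 1 \<le> g1 \<and> 1 \<le> g2) \<and> (\<forall>u\<in>{1..g1+g2}. \<nu> u = mu md g1 g2 u)"
proof -
  let ?m = "g1+g2"
  have ninj: "\<And>x y. x \<in> {1..?m} \<Longrightarrow> y \<in> {1..?m} \<Longrightarrow> \<nu> x = \<nu> y \<Longrightarrow> x = y"
    by (metis inv)
  have dec2: "\<nu> y < \<nu> x" if xy: "g1 < x" "x < y" "y \<le> ?m" for x y
  proof (rule ccontr)
    assume "\<not> \<nu> y < \<nu> x"
    moreover have "\<nu> x \<noteq> \<nu> y"
    proof
      assume "\<nu> x = \<nu> y"
      moreover have "x \<in> {1..?m}" "y \<in> {1..?m}" using xy by auto
      ultimately show False using ninj[of x y] xy by auto
    qed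
    ultimately have asc: "\<nu> x < \<nu> y" by auto
    define u where "u = \<nu> x"
    have ug: "u \<le> g1" using M2[of x y] xy asc u_def by auto
    have u1: "u \<in> {1..?m}" using rng[of x] xy u_def by auto
    have nu: "\<nu> u = x" using inv[of x] xy u_def by auto
    define v where "v = \<nu> y"
    have v1: "v \<in> {1..?m}" using rng[of y] xy v_def by auto
    have nv: "\<nu> v = y" using inv[of y] xy v_def by auto
    have uv: "u < v" using asc u_def v_def by simp
    consider "x < v" | "v = x" | "v < x" by linarith
    thus False
    proof cases
      case 1
      have "u < y" using ug xy by auto
      hence "\<nu> u \<le> g1" using M2[of u y] u1 xy 1 nu v_def by auto
      thus False using nu xy by auto
    next
      case 2
      hence "\<nu> x = y" using nv by simp
      thus False using u_def ug xy by auto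
    next
      case 3
      show False
      proof (cases "v \<le> g1")
        case True
        hence "\<nu> v < \<nu> u" using dec1[of u v] u1 uv by auto
        thus False using nu nv xy by auto
      next
        case False
        have "\<nu> x < \<nu> u" using u_def nu xy ug by auto
        moreover have "\<nu> u < \<nu> v" using nu nv xy by auto
        moreover have "1 \<le> u" "u < v" "v < x" "x \<le> ?m" using u1 uv 3 xy by auto
        ultimately show False using no231[of u v x] by auto
      qed
    qed
  qed
  show ?thesis
  proof (cases "1 \<le> g1 \<and> 1 \<le> g2 \<and> \<nu> 1 \<le> g1")
    case True
    have r1: "\<nu> x \<in> {1..g1}" if "x \<in> {1..g1}" for x
    proof -
      have "\<nu> x \<le> \<nu> 1" using dec1[of 1 x] that by (cases "x = 1") auto
      thus ?thesis using True rng[of x] that by auto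
    qed
    have f1: "\<nu> x = g1 + 1 - x" if "x \<in> {1..g1}" for x
      using dec_lin[of 1 "g1-1" 1 \<nu> x] r1 dec1 that True by auto
    have r2: "\<nu> y \<in> {g1+1..?m}" if "y \<in> {g1+1..?m}" for y
    proof (rule ccontr)
      assume "\<not> ?thesis"
      hence "\<nu> y \<in> {1..g1}" using rng[of y] that by auto
      hence "\<nu> (\<nu> (\<nu> y)) = \<nu> y" using r1 inv by auto
      hence "\<nu> (\<nu> y) \<in> {1..g1}" using r1[OF \<open>\<nu> y \<in> {1..g1}\<close>] by simp
      thus False using inv[of y] that by auto
    qed
    have f2: "\<nu> y = 2*g1 + g2 + 1 - y" if "y \<in> {g1+1..?m}" for y
      using dec_lin[of "g1+1" "g2-1" "g1+1" \<nu> y] r2 dec2 that True by auto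
    show ?thesis
      by (rule exI[where x=True]) (use True f1 f2 in \<open>auto simp: mu_def\<close>)
  next
    case False
    have glob: "\<nu> y < \<nu> x" if xy: "1 \<le> x" "x < y" "y \<le> ?m" for x y
    proof (cases "y \<le> g1")
      case True thus ?thesis using dec1 xy by auto
    next
      case yg: False
      show ?thesis
      proof (cases "g1 < x")
        case True thus ?thesis using dec2 xy by auto
      next
        case xg: False
        have g1: "1 \<le> g1" using xy xg by auto
        have g2: "1 \<le> g2" using xy yg by auto
        have n1: "g1 < \<nu> 1" using False g1 g2 by auto
        show ?thesis
        proof (rule ccontr)
          assume "\<not> ?thesis"
          moreover have "\<nu> x \<noteq> \<nu> y"
    proof
      assume "\<nu> x = \<nu> y"
      moreover have "x \<in> {1..?m}" "y \<in> {1..?m}" using xy by auto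
      ultimately show False using ninj[of x y] xy by auto
    qed
          ultimately have asc: "\<nu> x < \<nu> y" by auto
          have vxg: "\<nu> x \<le> g1" using M2 xy asc by auto
          show False
          proof (cases "\<nu> y \<le> g1")
            case True
            have "\<nu> (\<nu> y) < \<nu> (\<nu> x)" using dec1[of "\<nu> x" "\<nu> y"] True asc rng[of x] xy by auto
            thus False using inv[of x] inv[of y] xy by auto
          next
            case vyg: False
            define w where "w = \<nu> 1"
            have w: "w \<in> {1..?m}" "\<nu> w = 1" "g1 < w" using rng[of 1] inv[of 1] n1 g1 w_def by auto
            have yw: "y < w"
            proof (rule ccontr)
              assume "\<not> y < w"
              moreover have "y \<noteq> w" using w vyg g1 by auto
              ultimately have "w < y" by auto
              hence "\<nu> y < \<nu> w" using dec2[of w y] w xy by auto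
              thus False using w rng[of y] xy by auto
            qed
            have "\<nu> x \<noteq> 1" using w xg ninj[of x w] xy by auto
            hence "\<nu> w < \<nu> x" using w rng[of x] xy by auto
            thus False using no231[of x y w] xy yw w asc by auto
          qed
        qed
      qed
    qed
    have "\<nu> x = ?m + 1 - x" if "x \<in> {1..?m}" for x
    proof -
      have m1: "1 + (?m - 1) = ?m" using that by auto
      have "\<nu> x = 1 + (?m-1) - (x - 1)"
        by (rule dec_lin[of 1 "?m-1" 1 \<nu> x]) (use rng glob that m1 in auto)
      thus ?thesis using that by auto
    qed
    thus ?thesis by (intro exI[where x=False]) (auto simp: mu_def)
  qed
qed


lemma cm_dm': "cm k g1 (dm k g1 u) = u" by (auto simp: cm_def dm_def)
lemma dm_cm': "(k < i \<and> i \<le> k+g1) \<or> (2*k+g1 < i) \<Longrightarrow> dm k g1 (cm k g1 i) = i" by (auto simp: cm_def dm_def)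
lemma dm_less': "dm k g1 u < dm k g1 v \<longleftrightarrow> u < v" by (auto simp: dm_def)
lemma dm_le_g1': "dm k g1 u \<le> k + g1 \<longleftrightarrow> u \<le> g1" by (auto simp: dm_def)

context inS begin

definition "g1 = blo - k - 1"
definition "g2 = n + 1 - 2*k - blo"

lemma n_eq: "n = 3*k+g1+g2" and blo_eq: "blo = k+g1+1"
  using blo_bounds unfolding g1_def g2_def by auto

lemma B_eq': "B = {k+g1+1..2*k+g1}" using B_eq blo_eq by auto
lemma C_eq': "C = {2*k+g1+g2+1..n}" using C_eq n_eq by auto

abbreviation "isM' i \<equiv> (k < i \<and> i \<le> k+g1) \<or> (2*k+g1 < i \<and> i \<le> 2*k+g1+g2)"

lemma M_eq: "i \<in> M \<longleftrightarrow> isM' i"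
  unfolding M_def using A_eq B_eq' C_eq' n_eq by auto

lemma pA_f: assumes "i \<in> {1..k}" shows "p i = n+1-i"
proof -
  have r: "n+1-k \<le> p x \<and> p x \<le> n+1-k+(k-1)" if "1 \<le> x" "x \<le> 1+(k-1)" for x
  proof -
    have "x \<in> A" using that A_eq k1 by auto
    hence "p x \<in> C" by (rule pA)
    thus ?thesis using C_eq k1 by auto
  qed
  have d: "p y < p x" if "1 \<le> x" "x < y" "y \<le> 1+(k-1)" for x y
    using A_dec[of x y] that A_eq k1 by auto
  have "p i = n+1-k+(k-1) - (i - 1)" by (rule dec_lin[OF r d]) (use assms k1 in auto)
  thus ?thesis using assms k1 n_eq by auto
qed

definition "\<beta> = (\<lambda>i. if i \<in> {1..k} then p (k+g1+i) else i)"

lemma beta_perm: "\<beta> permutes {1..k}"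
proof (rule perm_helper)
  show "inj_on \<beta> {1..k}" by (rule inj_onI) (auto simp: \<beta>_def p_inj)
  show "\<beta> ` {1..k} \<subseteq> {1..k}"
  proof
    fix y assume "y \<in> \<beta> ` {1..k}"
    then obtain i where i: "i \<in> {1..k}" "y = p (k+g1+i)" by (auto simp: \<beta>_def)
    have "k+g1+i \<in> B" using B_eq' i by auto
    hence "p (k+g1+i) \<in> A" by (rule pB)
    thus "y \<in> {1..k}" using i A_eq by simp
  qed
  show "\<And>x. x \<notin> {1..k} \<Longrightarrow> \<beta> x = x" by (auto simp: \<beta>_def)
qed simp

lemma beta_nopeak: "nopeak \<beta> k"
  unfolding nopeak_def
proof (intro allI impI notI, elim conjE)
  fix x y z assume xyz: "1 \<le> x" "x < y" "y < z" "z \<le> k" and v: "\<beta> x < \<beta> y" "\<beta> z < \<beta> y"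
  define bx by' bz where "bx = k+g1+x" and "by' = k+g1+y" and "bz = k+g1+z"
  have bB: "bx \<in> B" "by' \<in> B" "bz \<in> B" using B_eq' xyz unfolding bx_def by'_def bz_def by auto
  have pv: "p bx < p by'" "p bz < p by'" using v xyz unfolding bx_def by'_def bz_def \<beta>_def by auto
  have "p bx \<noteq> p bz" using p_inj xyz unfolding bx_def bz_def by auto
  hence "p bz < p bx \<or> p bx < p bz" by auto
  thus False
  proof
    assume "p bz < p bx"
    moreover have "1 \<le> bx" "bx < by'" "by' < bz" "bz \<le> n" using bB B_sub xyz unfolding bx_def by'_def bz_def by auto
    ultimately show False using no231[of bx by' bz] pv by auto
  next
    assume xz: "p bx < p bz"
    have ax: "p bx \<in> A" "p by' \<in> A" "p bz \<in> A" using pB bB by auto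
    define cx cy cz where "cx = p (p bx)" and "cy = p (p by')" and "cz = p (p bz)"
    have tx: "(p bx, bx, cx) \<in> T" "(p by', by', cy) \<in> T" "(p bz, bz, cz) \<in> T"
      using ppB bB unfolding cx_def cy_def cz_def by auto
    have pc: "p cx = bx" "p cy = by'" "p cz = bz" using Tp tx by auto
    have cC: "cx \<in> C" "cy \<in> C" "cz \<in> C" using inC tx by blast+
    have "cy < cz" using A_dec[of "p bz" "p by'"] ax pv unfolding cy_def cz_def by auto
    moreover have "cz < cx" using A_dec[of "p bx" "p bz"] ax xz unfolding cx_def cz_def by auto
    moreover have "1 \<le> cy" "cx \<le> n" using cC C_sub by auto
    moreover have "p cx < p cy" "p cy < p cz" using pc xyz unfolding bx_def by'_def bz_def by auto
    ultimately show False using no231[of cy cz cx] by auto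
  qed
qed

lemma pB_f: "i \<in> B \<Longrightarrow> p i = \<beta> (i-k-g1)"
  using B_eq' by (auto simp: \<beta>_def)

lemma pC_f: assumes i: "i \<in> C" shows "p i = k+g1+inv \<beta> (n+1-i)"
proof -
  have t: "(p (p i), p i, i) \<in> T" by (rule ppC[OF i])
  have aA: "p (p i) \<in> A" using inA t by blast
  have bB: "p i \<in> B" using inB t by blast
  have pp: "p (p (p i)) = i" "p (p i) = p (p i)" using Tp[OF t] by auto
  have "p (p i) = n+1-i"
  proof -
    have "p (p (p i)) = n+1-p (p i)" using pA_f aA A_eq by auto
    thus ?thesis using pp aA A_eq n_eq k1 by auto
  qed
  moreover have "\<beta> (p i - k - g1) = p (p i)" using pB_f[OF bB] by simp
  ultimately have "inv \<beta> (n+1-i) = p i - k - g1"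
    using beta_perm permutes_inverses(2) by metis
  thus ?thesis using bB B_eq' by auto
qed

definition "\<nu> = (\<lambda>u. cm k g1 (p (dm k g1 u)))"

lemma dm_M: "u \<in> {1..g1+g2} \<Longrightarrow> dm k g1 u \<in> M" using M_eq by (auto simp: dm_def)
lemma cm_M: "i \<in> M \<Longrightarrow> cm k g1 i \<in> {1..g1+g2}"
proof -
  assume "i \<in> M"
  hence "isM' i" by (simp only: M_eq)
  thus ?thesis by (auto simp: cm_def)
qed
lemma dmcm_M: "i \<in> M \<Longrightarrow> dm k g1 (cm k g1 i) = i"
proof -
  assume "i \<in> M"
  hence "isM' i" by (simp only: M_eq)
  thus ?thesis by (intro dm_cm') auto
qed
lemma cm_less_M: "i \<in> M \<Longrightarrow> j \<in> M \<Longrightarrow> cm k g1 i < cm k g1 j \<longleftrightarrow> i < j"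
  by (metis dmcm_M dm_less')

lemma nu_p: "u \<in> {1..g1+g2} \<Longrightarrow> p (dm k g1 u) = dm k g1 (\<nu> u)"
  using dmcm_M M_p dm_M unfolding \<nu>_def by auto

lemma nu_M: assumes "u \<in> {1..g1+g2}" shows "\<nu> u \<in> {1..g1+g2}"
  using cm_M M_p dm_M assms unfolding \<nu>_def by auto

lemma nu_inv: assumes u: "u \<in> {1..g1+g2}" shows "\<nu> (\<nu> u) = u"
proof -
  have "p (dm k g1 (\<nu> u)) = p (p (dm k g1 u))" using nu_p[OF u] by simp
  also have "\<dots> = dm k g1 u" using M_inv dm_M u by auto
  finally show ?thesis unfolding \<nu>_def using cm_dm' by metis
qed

lemma nu_less: "u \<in> {1..g1+g2} \<Longrightarrow> v \<in> {1..g1+g2} \<Longrightarrow> \<nu> u < \<nu> v \<longleftrightarrow> p (dm k g1 u) < p (dm k g1 v)"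
  using nu_p dm_less' by auto

lemma nu_dec1: assumes "1 \<le> x" "x < y" "y \<le> g1" shows "\<nu> y < \<nu> x"
proof (rule ccontr)
  assume "\<not> ?thesis"
  moreover have "\<nu> y \<noteq> \<nu> x"
  proof
    assume "\<nu> y = \<nu> x"
    hence "\<nu> (\<nu> y) = \<nu> (\<nu> x)" by simp
    moreover have "x \<in> {1..g1+g2}" "y \<in> {1..g1+g2}" using assms by auto
    ultimately show False using nu_inv assms by simp
  qed
  ultimately have "\<nu> x < \<nu> y" by auto
  hence lt: "p (dm k g1 x) < p (dm k g1 y)" using nu_less assms by auto
  have bloB: "blo \<in> B" using B_eq' blo_eq k1 by auto
  have "p blo \<in> A" using pB bloB by auto
  hence "p blo < p (dm k g1 x)" using M_gt_A M_p dm_M assms by auto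
  moreover have "1 \<le> dm k g1 x" "dm k g1 x < dm k g1 y" "dm k g1 y < blo" "blo \<le> n"
    using assms blo_eq B_sub bloB by (auto simp: dm_def)
  ultimately show False using no231 lt by blast
qed

lemma nu_M2: assumes "1 \<le> x" "x < y" "y \<le> g1+g2" "\<nu> x < \<nu> y" shows "\<nu> x \<le> g1"
proof (rule ccontr)
  assume ng: "\<not> \<nu> x \<le> g1"
  have lt: "p (dm k g1 x) < p (dm k g1 y)" using nu_less assms by auto
  have "p (dm k g1 x) = dm k g1 (\<nu> x)" using nu_p assms by auto
  hence big: "2*k+g1 < p (dm k g1 x)" using ng by (auto simp: dm_def)
  have bloB: "blo \<in> B" using B_eq' blo_eq k1 by auto
  define c where "c = p (p blo)"
  have t: "(p blo, blo, c) \<in> T" using ppB[OF bloB] c_def by simp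
  have cC: "c \<in> C" and pc: "p c = blo" using inC t Tp[OF t] by auto
  have "p c < p (dm k g1 x)" using pc big blo_eq k1 by auto
  moreover have "dm k g1 y < c" using M_lt_C dm_M assms cC by auto
  moreover have "1 \<le> dm k g1 x" "dm k g1 x < dm k g1 y" "c \<le> n"
    using assms C_sub cC by (auto simp: dm_def)
  ultimately show False using no231 lt by blast
qed

lemma nu_no231: assumes "1 \<le> x" "x < y" "y < z" "z \<le> g1+g2" "\<nu> z < \<nu> x" "\<nu> x < \<nu> y" shows False
proof -
  have "p (dm k g1 z) < p (dm k g1 x)" "p (dm k g1 x) < p (dm k g1 y)" using nu_less assms by auto
  moreover have "1 \<le> dm k g1 x" "dm k g1 x < dm k g1 y" "dm k g1 y < dm k g1 z" "dm k g1 z \<le> n"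
    using assms dm_less' dm_M M_in by auto
  ultimately show False using no231 by blast
qed

lemma mid: "\<exists>md. (md \<longrightarrow> 1 \<le> g1 \<and> 1 \<le> g2) \<and> (\<forall>u\<in>{1..g1+g2}. \<nu> u = mu md g1 g2 u)"
  by (rule mid_struct) (use nu_M nu_inv nu_dec1 nu_M2 nu_no231 in auto)

lemma struct_main:
  "\<exists>md. bld k \<beta> g1 g2 md \<and> n = 3*k+g1+g2 \<and> p = bp k \<beta> g1 g2 md"
proof -
  obtain md where md: "md \<longrightarrow> 1 \<le> g1 \<and> 1 \<le> g2" "\<forall>u\<in>{1..g1+g2}. \<nu> u = mu md g1 g2 u" using mid by blast
  have b: "bld k \<beta> g1 g2 md" by unfold_locales (use k1 beta_perm beta_nopeak md in auto)
  have "p i = bp k \<beta> g1 g2 md i" for i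
  proof (cases "i \<in> {1..n}")
    case False thus ?thesis using p_out n_eq by (auto simp: bp_def)
  next
    case True
    consider "i \<in> A" | "i \<in> B" | "i \<in> C" | "i \<in> M" using regs[OF True] by blast
    thus ?thesis
    proof cases
      case 1 thus ?thesis using pA_f A_eq n_eq by (auto simp: bp_def)
    next
      case 2 thus ?thesis using pB_f B_eq' n_eq by (auto simp: bp_def)
    next
      case 3 thus ?thesis using pC_f C_eq' n_eq by (auto simp: bp_def)
    next
      case 4
      have "p i = dm k g1 (\<nu> (cm k g1 i))" using nu_p[OF cm_M[OF 4]] dmcm_M[OF 4] by simp
      also have "\<dots> = dm k g1 (mu md g1 g2 (cm k g1 i))" using md(2) cm_M[OF 4] by simp
      also have "\<dots> = bp k \<beta> g1 g2 md i"
      proof -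
        have "isM' i" using 4 by (simp only: M_eq)
        thus ?thesis by (auto simp: bp_def)
      qed
      finally show ?thesis .
    qed
  qed
  thus ?thesis using b n_eq by blast
qed

end


definition front :: "nat \<Rightarrow> (nat \<Rightarrow> nat) \<Rightarrow> nat \<Rightarrow> nat" where
  "front k \<beta> i = (if i = 1 then k+1 else if 2 \<le> i \<and> i \<le> k+1 then \<beta> (i-1) else i)"

lemma Vp_perm: "\<beta> \<in> Vp k \<Longrightarrow> \<beta> permutes {1..k}" by (simp add: Vp_def)
lemma Vp_range: "\<beta> \<in> Vp k \<Longrightarrow> i \<in> {1..k} \<Longrightarrow> \<beta> i \<in> {1..k}"
  by (metis Vp_perm permutes_in_image)
lemma Vp_out: "\<beta> \<in> Vp k \<Longrightarrow> i \<notin> {1..k} \<Longrightarrow> \<beta> i = i"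
  by (metis Vp_perm permutes_not_in)
lemma Vp_inj: "\<beta> \<in> Vp k \<Longrightarrow> \<beta> i = \<beta> j \<Longrightarrow> i = j"
  by (metis Vp_perm permutes_inj injD)

lemma Vp_1: "Vp 1 = {id}"
proof -
  have "{1..1::nat} = {1}" by auto
  moreover have "nopeak id 1" by (auto simp: nopeak_def)
  ultimately show ?thesis by (auto simp: Vp_def)
qed

lemma Vp_mono: assumes "\<beta> \<in> Vp k" shows "\<beta> \<in> Vp (Suc k)"
proof -
  have "\<beta> permutes {1..Suc k}" using Vp_perm[OF assms] by (meson permutes_subset atLeastAtMost_iff subsetI le_SucI)
  moreover have "nopeak \<beta> (Suc k)"
    unfolding nopeak_def
  proof (intro allI impI notI, elim conjE)
    fix x y z assume xyz: "1 \<le> x" "x < y" "y < z" "z \<le> Suc k" "\<beta> x < \<beta> y" "\<beta> z < \<beta> y"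
    show False
    proof (cases "z = Suc k")
      case True
      hence "\<beta> z = Suc k" using Vp_out[OF assms] by simp
      moreover have "\<beta> y \<le> k" using Vp_range[OF assms, of y] xyz True by auto
      ultimately show False using xyz by auto
    next
      case False
      thus False using assms xyz unfolding Vp_def nopeak_def by auto
    qed
  qed
  ultimately show ?thesis by (simp add: Vp_def)
qed

lemma front_Vp: assumes b: "\<beta> \<in> Vp k" shows "front k \<beta> \<in> Vp (Suc k)"
proof -
  have "front k \<beta> permutes {1..Suc k}"
  proof (rule perm_helper)
    show "inj_on (front k \<beta>) {1..Suc k}"
    proof (rule inj_onI)
      fix i j assume ij: "i \<in> {1..Suc k}" "j \<in> {1..Suc k}" "front k \<beta> i = front k \<beta> j"
      have r: "front k \<beta> i \<le> k" if "i \<in> {1..Suc k}" "i \<noteq> 1" for i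
      proof -
        have "i - 1 \<in> {1..k}" using that by auto
        hence "\<beta> (i-1) \<in> {1..k}" by (rule Vp_range[OF b])
        thus ?thesis using that by (auto simp: front_def)
      qed
      show "i = j"
      proof (cases "i = 1 \<or> j = 1")
        case True
        have f1: "front k \<beta> 1 = k+1" by (simp add: front_def)
        show ?thesis
        proof (rule ccontr)
          assume ne: "i \<noteq> j"
          show False
          proof (cases "i = 1")
            case True
            hence "j \<noteq> 1" using ne by simp
            hence "front k \<beta> j \<le> k" using r[of j] ij by simp
            thus False using ij(3) True f1 by simp
          next
            case False
            hence "j = 1" using \<open>i = 1 \<or> j = 1\<close> by simp
            have "front k \<beta> i \<le> k" using r[of i] ij False by simp
            thus False using ij(3) \<open>j = 1\<close> f1 by simp
          qed
        qed
      next
        case False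
        hence "\<beta> (i-1) = \<beta> (j-1)" using ij by (auto simp: front_def)
        hence "i - 1 = j - 1" by (rule Vp_inj[OF b])
        thus ?thesis using False ij by auto
      qed
    qed
    show "front k \<beta> ` {1..Suc k} \<subseteq> {1..Suc k}"
    proof
      fix v assume "v \<in> front k \<beta> ` {1..Suc k}"
      then obtain i where i: "i \<in> {1..Suc k}" "v = front k \<beta> i" by auto
      show "v \<in> {1..Suc k}"
      proof (cases "i = 1")
        case True thus ?thesis using i by (simp add: front_def)
      next
        case False
        hence "i - 1 \<in> {1..k}" using i by auto
        hence "\<beta> (i-1) \<in> {1..k}" by (rule Vp_range[OF b])
        thus ?thesis using i False by (auto simp: front_def)
      qed
    qed
    show "\<And>x. x \<notin> {1..Suc k} \<Longrightarrow> front k \<beta> x = x" by (auto simp: front_def)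
  qed simp
  moreover have "nopeak (front k \<beta>) (Suc k)"
    unfolding nopeak_def
  proof (intro allI impI notI, elim conjE)
    fix x y z assume xyz: "1 \<le> x" "x < y" "y < z" "z \<le> Suc k" "front k \<beta> x < front k \<beta> y" "front k \<beta> z < front k \<beta> y"
    show False
    proof (cases "x = 1")
      case True
      have "y - 1 \<in> {1..k}" using xyz by auto
      hence "\<beta> (y-1) \<in> {1..k}" by (rule Vp_range[OF b])
      hence "front k \<beta> y \<le> k" using xyz by (auto simp: front_def)
      thus False using xyz True by (auto simp: front_def)
    next
      case False
      hence "\<beta> (x-1) < \<beta> (y-1)" "\<beta> (z-1) < \<beta> (y-1)" using xyz by (auto simp: front_def)
      moreover have "1 \<le> x-1" "x-1 < y-1" "y-1 < z-1" "z-1 \<le> k" using xyz False by auto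
      ultimately show False using b unfolding Vp_def nopeak_def by blast
    qed
  qed
  ultimately show ?thesis by (simp add: Vp_def)
qed

lemma Vp_split: assumes "1 \<le> k" shows "Vp (Suc k) = Vp k \<union> front k ` Vp k"
proof (intro equalityI subsetI)
  fix b' assume b': "b' \<in> Vp (Suc k)"
  have perm: "b' permutes {1..Suc k}" using b' by (simp add: Vp_def)
  obtain j where j: "j \<in> {1..Suc k}" "b' j = Suc k"
    by (metis perm permutes_inverses(1) permutes_inv permutes_in_image atLeastAtMost_iff le_refl assms le_SucI)
  have rng: "i \<in> {1..Suc k} \<Longrightarrow> b' i \<in> {1..Suc k}" for i using perm by (metis permutes_in_image)
  have binj: "b' x = b' y \<Longrightarrow> x = y" for x y using perm by (metis permutes_inj injD)
  have "j = 1 \<or> j = Suc k"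
  proof (rule ccontr)
    assume "\<not> ?thesis"
    hence jj: "1 < j" "j < Suc k" using j by auto
    have "b' 1 < b' j" using rng[of 1] binj[of 1 j] jj j by fastforce
    moreover have "b' (Suc k) < b' j" using rng[of "Suc k"] binj[of "Suc k" j] jj j by fastforce
    ultimately show False using b' jj unfolding Vp_def nopeak_def by auto
  qed
  thus "b' \<in> Vp k \<union> front k ` Vp k"
  proof
    assume j1: "j = Suc k"
    have "b' permutes {1..k}"
    proof (rule permutes_superset[OF perm])
      fix x assume "x \<in> {1..Suc k} - {1..k}"
      hence "x = Suc k" by auto
      thus "b' x = x" using j j1 by simp
    qed
    moreover have "nopeak b' k" using b' unfolding Vp_def nopeak_def by auto
    ultimately show ?thesis by (simp add: Vp_def)
  next
    assume j1: "j = 1"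
    define b where "b = (\<lambda>i. if i \<in> {1..k} then b' (i+1) else i)"
    have bperm: "b permutes {1..k}"
    proof (rule perm_helper)
      show "inj_on b {1..k}" by (rule inj_onI) (use binj in \<open>auto simp: b_def\<close>)
      show "b ` {1..k} \<subseteq> {1..k}"
      proof
        fix v assume "v \<in> b ` {1..k}"
        then obtain i where i: "i \<in> {1..k}" "v = b' (i+1)" by (auto simp: b_def)
        have "v \<in> {1..Suc k}" using rng[of "i+1"] i by auto
        moreover have "v \<noteq> Suc k" using binj[of "i+1" 1] i j j1 by auto
        ultimately show "v \<in> {1..k}" by auto
      qed
      show "\<And>x. x \<notin> {1..k} \<Longrightarrow> b x = x" by (auto simp: b_def)
    qed simp
    have "nopeak b k"
      unfolding nopeak_def
    proof (intro allI impI notI, elim conjE)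
      fix x y z assume xyz: "1 \<le> x" "x < y" "y < z" "z \<le> k" "b x < b y" "b z < b y"
      hence "b' (x+1) < b' (y+1)" "b' (z+1) < b' (y+1)" by (auto simp: b_def)
      moreover have "1 \<le> x+1" "x+1 < y+1" "y+1 < z+1" "z+1 \<le> Suc k" using xyz by auto
      ultimately show False using b' unfolding Vp_def nopeak_def by blast
    qed
    hence bV: "b \<in> Vp k" using bperm by (simp add: Vp_def)
    have "front k b = b'"
    proof
      fix i show "front k b i = b' i"
      proof (cases "i \<in> {1..Suc k}")
        case True thus ?thesis using j j1 by (cases "i = 1") (auto simp: front_def b_def)
      next
        case False thus ?thesis using perm by (auto simp: front_def permutes_not_in)
      qed
    qed
    thus ?thesis using bV by blast
  qed
next
  fix b' assume "b' \<in> Vp k \<union> front k ` Vp k"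
  thus "b' \<in> Vp (Suc k)" using Vp_mono front_Vp by auto
qed

lemma card_Vp: "k \<ge> 1 \<Longrightarrow> card (Vp k) = 2^(k-1)"
proof (induction k rule: dec_induct)
  case base thus ?case using Vp_1 by simp
next
  case (step k)
  have disj: "Vp k \<inter> front k ` Vp k = {}"
  proof (rule ccontr)
    assume "\<not> ?thesis"
    then obtain b where b: "b \<in> Vp k" "front k b \<in> Vp k" by auto
    have "front k b 1 = Suc k" by (simp add: front_def)
    moreover have "front k b 1 \<le> k" using Vp_range[OF b(2), of 1] step by auto
    ultimately show False by simp
  qed
  have inj: "inj_on (front k) (Vp k)"
  proof (rule inj_onI)
    fix b c assume bc: "b \<in> Vp k" "c \<in> Vp k" "front k b = front k c"
    show "b = c"
    proof
      fix i show "b i = c i"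
      proof (cases "i \<in> {1..k}")
        case True
        have "front k b (i+1) = front k c (i+1)" using bc by simp
        thus ?thesis using True by (auto simp: front_def)
      next
        case False thus ?thesis using Vp_out bc by metis
      qed
    qed
  qed
  have "card (Vp (Suc k)) = card (Vp k) + card (front k ` Vp k)"
    unfolding Vp_split[OF step(1)] by (rule card_Un_disjoint) (use finite_Vp disj in auto)
  also have "\<dots> = 2 * card (Vp k)" using card_image[OF inj] by simp
  finally show ?case using step by (cases k) auto
qed


definition Kset :: "(nat \<times> (nat \<Rightarrow> nat)) set" where
  "Kset = Sigma {1..} Vp"

lemma has_sum_Kset:
  fixes y :: real assumes y: "\<bar>y\<bar> < 1/2"
  shows "((\<lambda>(k,\<beta>). y^k) has_sum (y / (1 - 2*y))) Kset"
proof -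
  have outer: "((\<lambda>k. 2^(k-1) * y^k) has_sum (y / (1 - 2*y))) {1..}" if yy: "\<bar>y\<bar> < 1/2" for y :: real
  proof -
    have "norm (2*y) < 1" using yy by simp
    from has_sum_cmult_right[OF has_sum_geometric_from_1[OF this], of "1/2"]
    have "((\<lambda>k. (1/2) * (2*y)^k) has_sum (1/2) * (2*y / (1 - 2*y))) {1..}" .
    moreover have "(1/2) * (2*y)^k = 2^(k-1) * y^k" if "k \<in> {1..}" for k :: nat
    proof -
      from that obtain j where "k = Suc j" by (cases k) auto
      thus ?thesis by (simp add: power_mult_distrib)
    qed
    ultimately have "((\<lambda>k. 2^(k-1) * y^k) has_sum (1/2) * (2*y / (1 - 2*y))) {1..}"
      using has_sum_cong[of "{1..}" "\<lambda>k. (1/2) * (2*y)^k" "\<lambda>k. 2^(k-1) * y^k"] by blast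
    moreover have "(1/2) * (2*y / (1 - 2*y)) = y / (1 - 2*y)" by simp
    ultimately show ?thesis by simp
  qed
  show ?thesis unfolding Kset_def
  proof (rule has_sum_Sigma_real[where g="\<lambda>k. 2^(k-1) * y^k" and G="\<lambda>k. 2^(k-1) * \<bar>y\<bar>^k"])
    fix k :: nat assume k: "k \<in> {1..}"
    show "((\<lambda>b. (\<lambda>(k,\<beta>). y^k) (k,b)) has_sum 2^(k-1) * y^k) (Vp k)"
      using k by (intro has_sum_finiteI) (auto simp: finite_Vp card_Vp)
    show "((\<lambda>b. \<bar>(\<lambda>(k,\<beta>). y^k) (k,b)\<bar>) has_sum 2^(k-1) * \<bar>y\<bar>^k) (Vp k)"
      using k by (intro has_sum_finiteI) (auto simp: finite_Vp card_Vp power_abs)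
  next
    show "((\<lambda>k. 2^(k-1) * y^k) has_sum y / (1 - 2*y)) {1..}" by (rule outer[OF y])
    show "(\<lambda>k. 2^(k-1) * \<bar>y\<bar>^k) summable_on {1..}"
      using outer[of "\<bar>y\<bar>"] y by (auto simp: has_sum_iff)
  qed
qed

definition Ptot :: "((nat \<times> (nat \<Rightarrow> nat)) \<times> (nat \<times> nat \<times> bool)) set" where
  "Ptot = Kset \<times> Qset"

lemma has_sum_Ptot:
  fixes t x y :: real assumes x: "\<bar>x\<bar> < 1" and y: "\<bar>y\<bar> < 1/2"
  shows "((\<lambda>((k,\<beta>),q). y^k * Wm t x q) has_sum (y / (1 - 2*y) * Fmid t x)) Ptot"
  unfolding Ptot_def
proof (rule has_sum_Sigma_real[where g="\<lambda>(k,\<beta>). y^k * Fmid t x" and G="\<lambda>(k,\<beta>). \<bar>y\<bar>^k * Fmid \<bar>t\<bar> \<bar>x\<bar>"])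
  fix a assume "a \<in> Kset"
  obtain k \<beta> where a: "a = (k,\<beta>)" by (cases a) auto
  show "((\<lambda>b. (\<lambda>((k,\<beta>),q). y^k * Wm t x q) (a,b)) has_sum (\<lambda>(k,\<beta>). y^k * Fmid t x) a) Qset"
    using has_sum_cmult_right[OF has_sum_Qset[OF x], of "y^k" t] a by simp
  have "\<bar>Wm t x q\<bar> = Wm \<bar>t\<bar> \<bar>x\<bar> q" for q
    by (cases q) (auto simp: Wm_def abs_mult power_abs)
  thus "((\<lambda>b. \<bar>(\<lambda>((k,\<beta>),q). y^k * Wm t x q) (a,b)\<bar>) has_sum (\<lambda>(k,\<beta>). \<bar>y\<bar>^k * Fmid \<bar>t\<bar> \<bar>x\<bar>) a) Qset"
    using has_sum_cmult_right[OF has_sum_Qset[of "\<bar>x\<bar>" "\<bar>t\<bar>"], of "\<bar>y\<bar>^k"] a x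
    by (simp add: abs_mult power_abs)
next
  show "((\<lambda>(k,\<beta>). y^k * Fmid t x) has_sum y / (1 - 2*y) * Fmid t x) Kset"
    using has_sum_cmult_left[OF has_sum_Kset[OF y], of "Fmid t x"] by (simp add: case_prod_unfold)
  have "\<bar>\<bar>y\<bar>\<bar> < 1/2" using y by simp
  from has_sum_cmult_left[OF has_sum_Kset[OF this], of "Fmid \<bar>t\<bar> \<bar>x\<bar>"]
  show "(\<lambda>(k,\<beta>). \<bar>y\<bar>^k * Fmid \<bar>t\<bar> \<bar>x\<bar>) summable_on Kset"
    by (auto simp: case_prod_unfold has_sum_iff)
qed


definition build :: "(nat \<times> (nat \<Rightarrow> nat)) \<times> (nat \<times> nat \<times> bool) \<Rightarrow> nat \<times> (nat \<Rightarrow> nat)" where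
  "build z = (case z of ((k,\<beta>),(g1,g2,md)) \<Rightarrow> (3*k+g1+g2, bp k \<beta> g1 g2 md))"

definition Sset :: "(nat \<times> (nat \<Rightarrow> nat)) set" where
  "Sset = {(n, p). n \<ge> 1 \<and> p \<in> Rset n}"

lemma Ptot_bld: assumes "((k,\<beta>),(g1,g2,md)) \<in> Ptot" shows "bld k \<beta> g1 g2 md" "(g1,g2,md) \<in> Qset"
proof -
  from assms have a: "1 \<le> k" "\<beta> \<in> Vp k" "(g1,g2,md) \<in> Qset" by (auto simp: Ptot_def Kset_def)
  thus "bld k \<beta> g1 g2 md" by unfold_locales (auto simp: Vp_def Qset_def)
  show "(g1,g2,md) \<in> Qset" using a by simp
qed

lemma build_in: assumes "z \<in> Ptot" shows "build z \<in> Sset"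
proof -
  obtain k \<beta> g1 g2 md where z: "z = ((k,\<beta>),(g1,g2,md))" by (metis prod.collapse)
  have b: "bld k \<beta> g1 g2 md" and q: "(g1,g2,md) \<in> Qset" using Ptot_bld assms z by auto
  have "bp k \<beta> g1 g2 md \<in> Rset (3*k+g1+g2)" using bld.p_Rset[OF b q] .
  moreover have "1 \<le> 3*k+g1+g2" using bld.k1[OF b] by simp
  ultimately show ?thesis using z by (simp add: build_def Sset_def)
qed

lemma build_onto: assumes "s \<in> Sset" shows "s \<in> build ` Ptot"
proof -
  obtain n p where s: "s = (n,p)" "1 \<le> n" "p \<in> Rset n" using assms by (auto simp: Sset_def)
  interpret I: inS n p by unfold_locales (use s in auto)
  obtain md where m: "bld I.k I.\<beta> I.g1 I.g2 md" "n = 3*I.k+I.g1+I.g2" "p = bp I.k I.\<beta> I.g1 I.g2 md"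
    using I.struct_main by blast
  have "ncyc 1 p n = fpc I.g1 I.g2 md" "ncyc 2 p n = tcc I.g1 I.g2 md"
    using bld.ncyc1_p[OF m(1)] bld.ncyc2_p[OF m(1)] m(2,3) by simp_all
  hence "(I.g1, I.g2, md) \<in> Qset" using I.ncyc12 bld.mdc[OF m(1)] by (auto simp: Qset_def)
  moreover have "I.\<beta> \<in> Vp I.k" using bld.bperm[OF m(1)] bld.nop[OF m(1)] by (simp add: Vp_def)
  ultimately have "((I.k, I.\<beta>), (I.g1, I.g2, md)) \<in> Ptot" using bld.k1[OF m(1)] by (simp add: Ptot_def Kset_def)
  moreover have "build ((I.k, I.\<beta>), (I.g1, I.g2, md)) = s" using m s by (simp add: build_def)
  ultimately show ?thesis by (metis image_eqI)
qed

lemma S_eq: "Sset = build ` Ptot" using build_in build_onto by blast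

lemma build_inj: "inj_on build Ptot"
proof (rule inj_onI)
  fix z z' assume zz: "z \<in> Ptot" "z' \<in> Ptot" and e: "build z = build z'"
  obtain k \<beta> g1 g2 md where z: "z = ((k,\<beta>),(g1,g2,md))" by (metis prod.collapse)
  obtain k' \<beta>' g1' g2' md' where z': "z' = ((k',\<beta>'),(g1',g2',md'))" by (metis prod.collapse)
  have b: "bld k \<beta> g1 g2 md" and b': "bld k' \<beta>' g1' g2' md'" using Ptot_bld zz z z' by auto
  have n: "3*k+g1+g2 = 3*k'+g1'+g2'" and p: "bp k \<beta> g1 g2 md = bp k' \<beta>' g1' g2' md'"
    using e z z' by (auto simp: build_def)
  have kk: "k = k'" using bld.ncyc3_p[OF b] bld.ncyc3_p[OF b'] n p by metis
  have gg: "g1 = g1'"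
  proof (rule ccontr)
    assume "g1 \<noteq> g1'"
    hence "g1 < g1' \<or> g1' < g1" by auto
    thus False
    proof
      assume lt: "g1 < g1'"
      let ?i = "k+g1+1"
      have "bp k \<beta> g1 g2 md ?i \<le> k" using bld.pB_range[OF b, of ?i] bld.k1[OF b] by auto
      moreover have "bld.isM k' g1' g2' ?i" using lt kk by auto
      hence "bld.isM k' g1' g2' (bp k' \<beta>' g1' g2' md' ?i)" using bld.pM_isM[OF b'] by blast
      ultimately show False using p kk by auto
    next
      assume lt: "g1' < g1"
      let ?i = "k'+g1'+1"
      have "bp k' \<beta>' g1' g2' md' ?i \<le> k'" using bld.pB_range[OF b', of ?i] bld.k1[OF b'] by auto
      moreover have "bld.isM k g1 g2 ?i" using lt kk by auto
      hence "bld.isM k g1 g2 (bp k \<beta> g1 g2 md ?i)" using bld.pM_isM[OF b] by blast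
      ultimately show False using p kk by auto
    qed
  qed
  have g2: "g2 = g2'" using n kk gg by simp
  have bb: "\<beta> = \<beta>'"
  proof
    fix i show "\<beta> i = \<beta>' i"
    proof (cases "i \<in> {1..k}")
      case True
      have "\<beta> i = bp k \<beta> g1 g2 md (k+g1+i)" using bld.pB[OF b, of "k+g1+i"] True by simp
      also have "\<dots> = bp k' \<beta>' g1' g2' md' (k'+g1'+i)" using p kk gg by simp
      also have "\<dots> = \<beta>' i" using bld.pB[OF b', of "k'+g1'+i"] True kk by simp
      finally show ?thesis .
    next
      case False
      thus ?thesis using bld.bperm[OF b] bld.bperm[OF b'] kk by (metis permutes_not_in)
    qed
  qed
  have mm: "md = md'"
  proof (rule ccontr)
    assume ne: "md \<noteq> md'"
    have "bp k \<beta> g1 g2 md (k+1) = bp k' \<beta>' g1' g2' md' (k+1)" using p by simp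
    moreover have "1 \<le> g1" "1 \<le> g2" using ne bld.mdc[OF b] bld.mdc[OF b'] gg g2 by auto
    ultimately show False using ne kk gg g2 bld.k1[OF b]
      by (cases md) (auto simp: bp_def mu_def cm_def dm_def)
  qed
  show "z = z'" using z z' kk gg g2 bb mm by simp
qed

lemma weight: assumes "z \<in> Ptot"
  shows "(\<lambda>(n, p). t ^ ncyc 1 p n * x ^ ncyc 2 p n * y ^ ncyc 3 p n) (build z) = (\<lambda>((k,\<beta>),q). y^k * Wm t x q) z"
proof -
  obtain k \<beta> g1 g2 md where z: "z = ((k,\<beta>),(g1,g2,md))" by (metis prod.collapse)
  have b: "bld k \<beta> g1 g2 md" using Ptot_bld assms z by auto
  show ?thesis using z bld.ncyc1_p[OF b] bld.ncyc2_p[OF b] bld.ncyc3_p[OF b]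
    by (simp add: build_def Wm_def)
qed

theorem lemma3p9:
  fixes t x y :: real
  assumes "\<bar>x\<bar> < 1" and "\<bar>y\<bar> < 1/2"
  shows "((\<lambda>(n, p). t ^ ncyc 1 p n * x ^ ncyc 2 p n * y ^ ncyc 3 p n) has_sum
           (y / (1 - 2*y) * ((6*x*t - 2*x^2*t + 2*x*t^2 - x^2*t^2) / (1 - x)^2)))
         {(n, p). n \<ge> 1 \<and> p \<in> Rset n}"
proof -
  let ?w = "\<lambda>(n, p). t ^ ncyc 1 p n * x ^ ncyc 2 p n * y ^ ncyc 3 p n"
  have "((\<lambda>((k,\<beta>),q). y^k * Wm t x q) has_sum (y / (1 - 2*y) * Fmid t x)) Ptot"
    by (rule has_sum_Ptot[OF assms])
  hence "((?w \<circ> build) has_sum (y / (1 - 2*y) * Fmid t x)) Ptot"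
    by (rule has_sum_cong[THEN iffD2, rotated]) (use weight in auto)
  hence "(?w has_sum (y / (1 - 2*y) * Fmid t x)) (build ` Ptot)"
    by (subst has_sum_reindex[OF build_inj])
  thus ?thesis unfolding S_eq[symmetric] Sset_def Fmid_def .
qed


end
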